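(* Let $\mathcal{H}$ be an $n$-dimensional (real or complex) Hilbert space, let $F=\{f_i\}_{i=1}^N$ be a tight frame for $\mathcal{H}$, and let $\{q_i\}_{i=1}^N$ be the weight number sequence associated with a probability sequence $\{p_i\}_{i=1}^N$. Then $(F,S_F^{-1}F)$ is the unique 1-erasure POD-pair among the dual pairs $(F,G)$ with $G$ a dual of $F$ if and only if $(F,S_F^{-1}F)$ is the unique 1-erasure PASOD-pair among the dual pairs $(F,G)$ with $G$ a dual of $F$.
   Context: A finite sequence $F=\{f_i\}_{i=1}^N$ in $\mathcal{H}$ is a frame if there are $A,B>0$ with $A\|f\|^2\le\sum_{i=1}^N|\langle f,f_i\rangle|^2\le B\|f\|^2$ for all $f$; it is tight if one can take $A=B$. The frame operator is $S_Ff=\sum_i\langle f,f_i\rangle f_i$; canonical dual $S_F^{-1}F=\{S_F^{-1}f_i\}_{i=1}^N$. A frame $G=\{g_i\}_{i=1}^N$ is a dual of $F$ if $f=\sum_i\langle f,f_i\rangle g_i=\sum_i\langle f,g_i\rangle f_i$ for all $f$; then $(F,G)$ is an $(N,n)$ dual pair. A probability sequence is $\{p_i\}_{i=1}^N$ with $0\le p_i\le1$, $\sum p_i=1$; weight numbers $q_i=\frac{\sum_{j} p_j}{\sum_{j} p_j-p_i}\cdot\frac{N-1}{n}$. For $\Lambda\subseteq\{1,\dots,N\}$ the error operator is $E_{\Lambda,(F,G)}f=\sum_{i\in\Lambda}q_i\langle f,f_i\rangle g_i$. Let $\mathcal{O}_P^{(1)}(F,G)=\max_{|\Lambda|=1}\|E_{\Lambda,(F,G)}\|$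 and $\mathcal{A}_P^{(1)}(F,G)=\max_{|\Lambda|=1}\frac{\|E_{\Lambda,(F,G)}\|+\rho(E_{\Lambda,(F,G)})}{2}$ ($\rho$ = spectral radius); let $\mathcal{O}_P^{(1)}$ and $\mathcal{A}_P^{(1)}$ be their infima over all $(N,n)$ dual pairs in $\mathcal{H}$. A dual pair is a 1-erasure POD-pair if $\mathcal{O}_P^{(1)}(F,G)=\mathcal{O}_P^{(1)}$, and a 1-erasure PASOD-pair if $\mathcal{A}_P^{(1)}(F,G)=\mathcal{A}_P^{(1)}$. *)

theory Defs
  imports "Jordan_Normal_Form.Spectral_Radius"
begin

text \<open>The n-dimensional Hilbert space H is modelled as the coordinate space K^n, K being
  either the reals (K = range of_real) or the complex numbers (K = UNIV), realised inside
  complex n-vectors. Inner product: linear in the first argument, conjugate linear in the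
  second.  Finite sequences are maps nat to vectors, indexed by 1..N.\<close>

definition hspace :: "complex set \<Rightarrow> nat \<Rightarrow> complex vec set" where
  "hspace K n = {v \<in> carrier_vec n. \<forall>r<n. v $ r \<in> K}"

definition ip :: "complex vec \<Rightarrow> complex vec \<Rightarrow> complex" where
  "ip f g = f \<bullet>c g"

definition vnorm :: "complex vec \<Rightarrow> real" where
  "vnorm v = sqrt (Re (v \<bullet>c v))"

definition lincomb :: "nat \<Rightarrow> nat \<Rightarrow> (nat \<Rightarrow> complex) \<Rightarrow> (nat \<Rightarrow> complex vec) \<Rightarrow> complex vec" where
  "lincomb n N c G = vec n (\<lambda>r. \<Sum>i\<in>{1..N}. c i * G i $ r)"

definition is_frame :: "complex set \<Rightarrow> nat \<Rightarrow> nat \<Rightarrow> (nat \<Rightarrow> complex vec) \<Rightarrow> bool" where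
  "is_frame K n N F \<longleftrightarrow> (\<forall>i\<in>{1..N}. F i \<in> hspace K n) \<and>
     (\<exists>A B. A > 0 \<and> B > 0 \<and> (\<forall>f\<in>hspace K n.
        A * (vnorm f)\<^sup>2 \<le> (\<Sum>i\<in>{1..N}. (cmod (ip f (F i)))\<^sup>2) \<and>
        (\<Sum>i\<in>{1..N}. (cmod (ip f (F i)))\<^sup>2) \<le> B * (vnorm f)\<^sup>2))"

definition is_tight_frame :: "complex set \<Rightarrow> nat \<Rightarrow> nat \<Rightarrow> (nat \<Rightarrow> complex vec) \<Rightarrow> bool" where
  "is_tight_frame K n N F \<longleftrightarrow> (\<forall>i\<in>{1..N}. F i \<in> hspace K n) \<and>
     (\<exists>A. A > 0 \<and> (\<forall>f\<in>hspace K n.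
        (\<Sum>i\<in>{1..N}. (cmod (ip f (F i)))\<^sup>2) = A * (vnorm f)\<^sup>2))"

definition frame_op :: "nat \<Rightarrow> nat \<Rightarrow> (nat \<Rightarrow> complex vec) \<Rightarrow> complex vec \<Rightarrow> complex vec" where
  "frame_op n N F f = lincomb n N (\<lambda>i. ip f (F i)) F"

definition canon_dual :: "complex set \<Rightarrow> nat \<Rightarrow> nat \<Rightarrow> (nat \<Rightarrow> complex vec) \<Rightarrow> nat \<Rightarrow> complex vec" where
  "canon_dual K n N F i = the_inv_into (hspace K n) (frame_op n N F) (F i)"

definition is_dual :: "complex set \<Rightarrow> nat \<Rightarrow> nat \<Rightarrow> (nat \<Rightarrow> complex vec) \<Rightarrow> (nat \<Rightarrow> complex vec) \<Rightarrow> bool" where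
  "is_dual K n N F G \<longleftrightarrow> is_frame K n N G \<and>
     (\<forall>f\<in>hspace K n. f = lincomb n N (\<lambda>i. ip f (F i)) G \<and> f = lincomb n N (\<lambda>i. ip f (G i)) F)"

definition dual_pair :: "complex set \<Rightarrow> nat \<Rightarrow> nat \<Rightarrow> (nat \<Rightarrow> complex vec) \<Rightarrow> (nat \<Rightarrow> complex vec) \<Rightarrow> bool" where
  "dual_pair K n N F G \<longleftrightarrow> is_frame K n N F \<and> is_dual K n N F G"

definition prob_seq :: "nat \<Rightarrow> (nat \<Rightarrow> real) \<Rightarrow> bool" where
  "prob_seq N p \<longleftrightarrow> (\<forall>i\<in>{1..N}. 0 \<le> p i \<and> p i \<le> 1) \<and> (\<Sum>i\<in>{1..N}. p i) = 1"

definition weight :: "nat \<Rightarrow> nat \<Rightarrow> (nat \<Rightarrow> real) \<Rightarrow> nat \<Rightarrow> real" where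
  "weight n N p i = (\<Sum>j\<in>{1..N}. p j) / ((\<Sum>j\<in>{1..N}. p j) - p i) * ((real N - 1) / real n)"

definition err_op :: "nat \<Rightarrow> nat \<Rightarrow> (nat \<Rightarrow> real) \<Rightarrow> (nat \<Rightarrow> complex vec) \<Rightarrow> (nat \<Rightarrow> complex vec) \<Rightarrow> nat set \<Rightarrow> complex mat" where
  "err_op n N p F G \<Lambda> = mat n n (\<lambda>(r, s). \<Sum>i\<in>\<Lambda>. complex_of_real (weight n N p i) * G i $ r * cnj (F i $ s))"

definition opnorm :: "complex set \<Rightarrow> nat \<Rightarrow> complex mat \<Rightarrow> real" where
  "opnorm K n A = Sup {vnorm (A *\<^sub>v v) | v. v \<in> hspace K n \<and> vnorm v = 1}"

definition O1 :: "complex set \<Rightarrow> nat \<Rightarrow> nat \<Rightarrow> (nat \<Rightarrow> real) \<Rightarrow> (nat \<Rightarrow> complex vec) \<Rightarrow> (nat \<Rightarrow> complex vec) \<Rightarrow> real" where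
  "O1 K n N p F G = Max {opnorm K n (err_op n N p F G \<Lambda>) | \<Lambda>. \<Lambda> \<subseteq> {1..N} \<and> card \<Lambda> = 1}"

definition A1 :: "complex set \<Rightarrow> nat \<Rightarrow> nat \<Rightarrow> (nat \<Rightarrow> real) \<Rightarrow> (nat \<Rightarrow> complex vec) \<Rightarrow> (nat \<Rightarrow> complex vec) \<Rightarrow> real" where
  "A1 K n N p F G = Max {(opnorm K n (err_op n N p F G \<Lambda>) + spectral_radius (err_op n N p F G \<Lambda>)) / 2
      | \<Lambda>. \<Lambda> \<subseteq> {1..N} \<and> card \<Lambda> = 1}"

definition O1_opt :: "complex set \<Rightarrow> nat \<Rightarrow> nat \<Rightarrow> (nat \<Rightarrow> real) \<Rightarrow> real" where
  "O1_opt K n N p = Inf {O1 K n N p F G | F G. dual_pair K n N F G}"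

definition A1_opt :: "complex set \<Rightarrow> nat \<Rightarrow> nat \<Rightarrow> (nat \<Rightarrow> real) \<Rightarrow> real" where
  "A1_opt K n N p = Inf {A1 K n N p F G | F G. dual_pair K n N F G}"

definition is_POD_pair :: "complex set \<Rightarrow> nat \<Rightarrow> nat \<Rightarrow> (nat \<Rightarrow> real) \<Rightarrow> (nat \<Rightarrow> complex vec) \<Rightarrow> (nat \<Rightarrow> complex vec) \<Rightarrow> bool" where
  "is_POD_pair K n N p F G \<longleftrightarrow> dual_pair K n N F G \<and> O1 K n N p F G = O1_opt K n N p"

definition is_PASOD_pair :: "complex set \<Rightarrow> nat \<Rightarrow> nat \<Rightarrow> (nat \<Rightarrow> real) \<Rightarrow> (nat \<Rightarrow> complex vec) \<Rightarrow> (nat \<Rightarrow> complex vec) \<Rightarrow> bool" where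
  "is_PASOD_pair K n N p F G \<longleftrightarrow> dual_pair K n N F G \<and> A1 K n N p F G = A1_opt K n N p"

end

theory Submission
  imports Defs
begin

lemma real_cs:
  fixes x y :: "nat \<Rightarrow> real"
  shows "(\<Sum>r\<in>A. x r * y r)^2 \<le> (\<Sum>r\<in>A. (x r)^2) * (\<Sum>r\<in>A. (y r)^2)"
proof -
  have "0 \<le> (\<Sum>r\<in>A. \<Sum>s\<in>A. (x r * y s - x s * y r)^2)"
    by (intro sum_nonneg) auto
  also have "\<dots> = (\<Sum>r\<in>A. \<Sum>s\<in>A. (x r)^2 * (y s)^2 + (x s)^2 * (y r)^2 - 2 * ((x r * y r) * (x s * y s)))"
    by (intro sum.cong refl) (simp add: power2_eq_square algebra_simps)
  also have "\<dots> = 2 * ((\<Sum>r\<in>A. (x r)^2) * (\<Sum>r\<in>A. (y r)^2)) - 2 * (\<Sum>r\<in>A. x r * y r)^2"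
  proof -
    have e1: "(\<Sum>r\<in>A. \<Sum>s\<in>A. (x r)^2 * (y s)^2) = (\<Sum>r\<in>A. (x r)^2) * (\<Sum>r\<in>A. (y r)^2)"
      by (simp add: sum_product)
    have e2: "(\<Sum>r\<in>A. \<Sum>s\<in>A. (x s)^2 * (y r)^2) = (\<Sum>r\<in>A. (x r)^2) * (\<Sum>r\<in>A. (y r)^2)"
      by (simp add: sum_product sum.swap[of "\<lambda>r s. (x s)^2 * (y r)^2"] mult.commute)
    have e3: "(\<Sum>r\<in>A. \<Sum>s\<in>A. 2 * ((x r * y r) * (x s * y s))) = 2 * (\<Sum>r\<in>A. x r * y r)^2"
    proof -
      have "(\<Sum>r\<in>A. x r * y r)^2 = (\<Sum>r\<in>A. \<Sum>s\<in>A. (x r * y r) * (x s * y s))"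
        by (simp add: power2_eq_square sum_product)
      thus ?thesis by (simp add: sum_distrib_left)
    qed
    show ?thesis using e1 e2 e3 by (simp add: sum_subtractf sum.distrib)
  qed
  finally show ?thesis by simp
qed

lemma ip_expand: "dim_vec w = n \<Longrightarrow> ip v w = (\<Sum>r<n. v$r * cnj (w$r))"
  unfolding ip_def scalar_prod_def by (simp add: atLeast0LessThan)

lemma ip_expand_carrier: "w \<in> carrier_vec n \<Longrightarrow> ip v w = (\<Sum>r<n. v$r * cnj (w$r))"
  by (rule ip_expand) auto

lemma ip_unit: "v \<in> carrier_vec n \<Longrightarrow> k < n \<Longrightarrow> ip (unit_vec n k) v = cnj (v $ k)"
proof -
  assume a: "v \<in> carrier_vec n" "k < n"
  have "ip (unit_vec n k) v = (\<Sum>r<n. (if r = k then 1 else 0) * cnj (v $ r))"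
    using a by (simp add: ip_expand)
  also have "\<dots> = (\<Sum>r<n. (if r = k then cnj (v$r) else 0))" by (rule sum.cong) auto
  also have "\<dots> = cnj (v $ k)" using a by simp
  finally show ?thesis .
qed

definition nsq :: "complex vec \<Rightarrow> real" where
  "nsq v = (\<Sum>r<dim_vec v. (cmod (v$r))^2)"

lemma ip_self: "ip v v = of_real (nsq v)"
  unfolding nsq_def ip_expand[OF refl] by (simp only: of_real_sum complex_norm_square)

lemma nsq_nonneg: "0 \<le> nsq v" unfolding nsq_def by (intro sum_nonneg) auto

lemma vnorm_nsq: "vnorm v = sqrt (nsq v)"
  unfolding vnorm_def by (simp add: ip_self[unfolded ip_def])

lemma vnorm_sq: "(vnorm v)^2 = nsq v"
  by (simp add: vnorm_nsq nsq_nonneg)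

lemma vnorm_nonneg: "0 \<le> vnorm v" by (simp add: vnorm_nsq nsq_nonneg)

lemma cs: assumes "dim_vec v = dim_vec w" shows "cmod (ip v w) \<le> vnorm v * vnorm w"
proof -
  let ?n = "dim_vec w"
  have "cmod (ip v w) \<le> (\<Sum>r<?n. cmod (v$r) * cmod (w$r))"
    unfolding ip_expand[OF refl] by (rule order_trans[OF norm_sum]) (simp add: norm_mult)
  moreover have "(\<Sum>r<?n. cmod (v$r) * cmod (w$r))^2 \<le> nsq v * nsq w"
    using real_cs[of "\<lambda>r. cmod (v$r)" "\<lambda>r. cmod (w$r)" "{..<?n}"] assms unfolding nsq_def by simp
  hence "(\<Sum>r<?n. cmod (v$r) * cmod (w$r)) \<le> sqrt (nsq v * nsq w)"
    using real_le_rsqrt by blast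
  ultimately show ?thesis by (simp add: vnorm_nsq real_sqrt_mult)
qed


definition Kok :: "complex set \<Rightarrow> bool" where "Kok K \<longleftrightarrow> K = \<real> \<or> K = UNIV"

lemma hspace_carrier: "v \<in> hspace K n \<Longrightarrow> v \<in> carrier_vec n"
  unfolding hspace_def by auto

lemma hspace_dim: "v \<in> hspace K n \<Longrightarrow> dim_vec v = n"
  unfolding hspace_def by auto

lemma hspace_smult_real: "Kok K \<Longrightarrow> v \<in> hspace K n \<Longrightarrow> complex_of_real r \<cdot>\<^sub>v v \<in> hspace K n"
  unfolding hspace_def Kok_def by (auto simp: Reals_mult)

lemma hspace_unit: "Kok K \<Longrightarrow> k < n \<Longrightarrow> unit_vec n k \<in> hspace K n"
  unfolding hspace_def Kok_def by auto

lemma hspace_add: "Kok K \<Longrightarrow> u \<in> hspace K n \<Longrightarrow> v \<in> hspace K n \<Longrightarrow> u + v \<in> hspace K n"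
  unfolding hspace_def Kok_def by (auto simp: Reals_add)

lemma ip_smult_left: assumes "dim_vec v = dim_vec w" shows "ip (c \<cdot>\<^sub>v v) w = c * ip v w"
proof -
  have "ip (c \<cdot>\<^sub>v v) w = (\<Sum>r<dim_vec w. (c \<cdot>\<^sub>v v)$r * cnj (w$r))" by (rule ip_expand) simp
  also have "\<dots> = (\<Sum>r<dim_vec w. c * (v$r * cnj (w$r)))" by (rule sum.cong) (use assms in auto)
  also have "\<dots> = c * ip v w" by (simp add: ip_expand sum_distrib_left)
  finally show ?thesis .
qed

lemma ip_smult_right: "ip v (c \<cdot>\<^sub>v w) = cnj c * ip v w"
  unfolding ip_def by (simp add: scalar_prod_def sum_distrib_left algebra_simps)

lemma ip_cnj: "dim_vec v = dim_vec w \<Longrightarrow> ip w v = cnj (ip v w)"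
  by (simp add: ip_expand mult.commute)

lemma nsq_smult: "nsq (c \<cdot>\<^sub>v v) = (cmod c)^2 * nsq v"
  unfolding nsq_def by (simp add: sum_distrib_left norm_mult power_mult_distrib)

lemma vnorm_smult: "vnorm (c \<cdot>\<^sub>v v) = cmod c * vnorm v"
  by (simp add: vnorm_nsq nsq_smult real_sqrt_mult)

section \<open>Rank one error operators\<close>

lemma err_op_single: "err_op n N p F G {i} = mat n n (\<lambda>(r, s). complex_of_real (weight n N p i) * G i $ r * cnj (F i $ s))"
  unfolding err_op_def by simp

lemma err_op_carrier: "err_op n N p F G L \<in> carrier_mat n n"
  unfolding err_op_def by simp

lemma err_mult:
  assumes v: "v \<in> carrier_vec n" and f: "F i \<in> carrier_vec n" and g: "G i \<in> carrier_vec n"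
  shows "err_op n N p F G {i} *\<^sub>v v = (complex_of_real (weight n N p i) * ip v (F i)) \<cdot>\<^sub>v G i"
proof (rule eq_vecI)
  show "dim_vec (err_op n N p F G {i} *\<^sub>v v) = dim_vec ((complex_of_real (weight n N p i) * ip v (F i)) \<cdot>\<^sub>v G i)"
    using g by (simp add: err_op_single)
  fix r assume r: "r < dim_vec ((complex_of_real (weight n N p i) * ip v (F i)) \<cdot>\<^sub>v G i)"
  hence r': "r < n" using g by simp
  have "(err_op n N p F G {i} *\<^sub>v v) $ r = (\<Sum>s<n. complex_of_real (weight n N p i) * G i $ r * cnj (F i $ s) * v $ s)"
    using r' v by (simp add: err_op_single scalar_prod_def row_def atLeast0LessThan)
  also have "\<dots> = complex_of_real (weight n N p i) * G i $ r * (\<Sum>s<n. v $ s * cnj (F i $ s))"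
    by (simp add: sum_distrib_left algebra_simps)
  also have "\<dots> = ((complex_of_real (weight n N p i) * ip v (F i)) \<cdot>\<^sub>v G i) $ r"
    using r' f g by (simp add: ip_expand)
  finally show "(err_op n N p F G {i} *\<^sub>v v) $ r = ((complex_of_real (weight n N p i) * ip v (F i)) \<cdot>\<^sub>v G i) $ r" .
qed

lemma opnorm_single:
  assumes K: "Kok K" and n: "n \<ge> 1" and f: "F i \<in> hspace K n" and g: "G i \<in> carrier_vec n"
    and q: "weight n N p i \<ge> 0"
  shows "opnorm K n (err_op n N p F G {i}) = weight n N p i * vnorm (G i) * vnorm (F i)"
proof -
  let ?q = "weight n N p i"
  let ?a = "?q * vnorm (G i) * vnorm (F i)"
  let ?X = "{vnorm (err_op n N p F G {i} *\<^sub>v v) | v. v \<in> hspace K n \<and> vnorm v = 1}"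
  have fc: "F i \<in> carrier_vec n" using f by (rule hspace_carrier)
  have val: "vnorm (err_op n N p F G {i} *\<^sub>v v) = ?q * cmod (ip v (F i)) * vnorm (G i)"
    if "v \<in> hspace K n" for v
    using err_mult[where F=F and G=G and i=i, OF hspace_carrier[OF that] fc g] q
    by (simp add: vnorm_smult norm_mult)
  have up: "x \<le> ?a" if "x \<in> ?X" for x
  proof -
    from that obtain v where v: "v \<in> hspace K n" "vnorm v = 1" and x: "x = vnorm (err_op n N p F G {i} *\<^sub>v v)"
      by auto
    have "cmod (ip v (F i)) \<le> vnorm v * vnorm (F i)"
      by (rule cs) (simp add: hspace_dim[OF v(1)] hspace_dim[OF f])
    hence "?q * cmod (ip v (F i)) * vnorm (G i) \<le> ?q * (vnorm (F i)) * vnorm (G i)"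
      using v(2) q vnorm_nonneg[of "G i"] by (intro mult_right_mono mult_left_mono) auto
    thus ?thesis using x val[OF v(1)] by (simp add: algebra_simps)
  qed
  have mem: "?a \<in> ?X"
  proof (cases "vnorm (F i) = 0")
    case True
    define v :: "complex vec" where "v = unit_vec n 0"
    have v: "v \<in> hspace K n" unfolding v_def using K n by (intro hspace_unit) auto
    have v1: "vnorm v = 1" unfolding v_def vnorm_nsq nsq_def using n
      apply (subst sum.cong[OF refl, of _ _ "\<lambda>r. if r = 0 then 1 else 0"]) by auto
    have "cmod (ip v (F i)) \<le> vnorm v * vnorm (F i)"
      by (rule cs) (simp add: hspace_dim[OF v] hspace_dim[OF f])
    hence "cmod (ip v (F i)) = 0" using True by simp
    hence "vnorm (err_op n N p F G {i} *\<^sub>v v) = ?a" using val[OF v] True by simp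
    thus ?thesis using v v1 by force
  next
    case False
    hence pos: "vnorm (F i) > 0" using vnorm_nonneg[of "F i"] by simp
    define v where "v = complex_of_real (1 / vnorm (F i)) \<cdot>\<^sub>v F i"
    have v: "v \<in> hspace K n" unfolding v_def using K f by (rule hspace_smult_real)
    have v1: "vnorm v = 1" unfolding v_def vnorm_smult norm_of_real using pos by simp
    have "ip v (F i) = complex_of_real (1 / vnorm (F i)) * of_real (nsq (F i))"
      unfolding v_def ip_smult_left[OF refl] ip_self ..
    also have "\<dots> = complex_of_real (nsq (F i) / vnorm (F i))" by simp
    finally have "cmod (ip v (F i)) = \<bar>nsq (F i) / vnorm (F i)\<bar>" by (simp only: norm_of_real)
    hence "cmod (ip v (F i)) = nsq (F i) / vnorm (F i)" using pos nsq_nonneg[of "F i"] by simp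
    also have "\<dots> = vnorm (F i)" using pos by (simp add: vnorm_sq[symmetric] power2_eq_square)
    finally have "vnorm (err_op n N p F G {i} *\<^sub>v v) = ?a" using val[OF v] by simp
    thus ?thesis using v v1 by force
  qed
  show ?thesis unfolding opnorm_def
    by (rule cSup_eq_maximum[OF mem]) (use up in auto)
qed

lemma spectral_radius_single:
  assumes n: "n \<ge> 1" and f: "F i \<in> carrier_vec n" and g: "G i \<in> carrier_vec n"
    and q: "weight n N p i \<ge> 0"
  shows "spectral_radius (err_op n N p F G {i}) = weight n N p i * cmod (ip (G i) (F i))"
proof -
  let ?E = "err_op n N p F G {i}"
  let ?q = "weight n N p i"
  let ?l = "complex_of_real ?q * ip (G i) (F i)"
  have E: "?E \<in> carrier_mat n n" by (rule err_op_carrier)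
  have ev: "cmod k \<le> cmod ?l" if "k \<in> spectrum ?E" for k
  proof -
    from that obtain v where v: "v \<in> carrier_vec n" "v \<noteq> 0\<^sub>v n" "?E *\<^sub>v v = k \<cdot>\<^sub>v v"
      unfolding spectrum_def eigenvalue_def eigenvector_def using E by auto
    have Ev: "?E *\<^sub>v v = (complex_of_real ?q * ip v (F i)) \<cdot>\<^sub>v G i" by (rule err_mult[where F=F and G=G and i=i, OF v(1) f g])
    show ?thesis
    proof (cases "ip v (F i) = 0")
      case True
      have z: "0 \<cdot>\<^sub>v G i = 0\<^sub>v n" by (rule eq_vecI) (use g in auto)
      hence "k \<cdot>\<^sub>v v = 0\<^sub>v n" using v(3) Ev g True by simp
      moreover from v(1,2) obtain r where r: "r < n" "v $ r \<noteq> 0"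
        by (metis eq_vecI carrier_vecD index_zero_vec)
      ultimately have "k * v $ r = 0" by (metis index_smult_vec(1) index_zero_vec(1) carrier_vecD v(1))
      hence "k = 0" using r by simp
      thus ?thesis by simp
    next
      case False
      have "k * ip v (F i) = ip (k \<cdot>\<^sub>v v) (F i)" using v(1) f by (simp add: ip_smult_left)
      also have "\<dots> = ip ((complex_of_real ?q * ip v (F i)) \<cdot>\<^sub>v G i) (F i)" using v(3) Ev by simp
      also have "\<dots> = ?l * ip v (F i)" using g f by (simp add: ip_smult_left)
      finally have "k = ?l" using False by simp
      thus ?thesis by simp
    qed
  qed
  from spectral_radius_mem_max(1)[OF E] n obtain k0 where k0: "k0 \<in> spectrum ?E" "spectral_radius ?E = cmod k0"
    by auto
  have le: "spectral_radius ?E \<le> cmod ?l" using ev[OF k0(1)] k0(2) by simp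
  have ge: "cmod ?l \<le> spectral_radius ?E"
  proof (cases "?l = 0")
    case True hence "cmod ?l = 0" by (simp only: norm_zero)
    thus ?thesis using k0(2) norm_ge_zero[of k0] by linarith
  next
    case False
    hence ipnz: "ip (G i) (F i) \<noteq> 0" by auto
    have gnz: "G i \<noteq> 0\<^sub>v n"
    proof
      assume "G i = 0\<^sub>v n"
      hence "ip (G i) (F i) = 0" using f by (simp add: ip_expand)
      thus False using ipnz by simp
    qed
    have "?E *\<^sub>v G i = ?l \<cdot>\<^sub>v G i" by (rule err_mult[where F=F and G=G and i=i, OF g f g])
    hence "?l \<in> spectrum ?E" unfolding spectrum_def eigenvalue_def eigenvector_def
      using E g gnz by auto
    thus ?thesis using spectral_radius_mem_max(2)[OF E] n by auto
  qed
  show ?thesis using le ge q by (simp add: norm_mult)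
qed


definition setting :: "complex set \<Rightarrow> nat \<Rightarrow> nat \<Rightarrow> (nat \<Rightarrow> real) \<Rightarrow> bool" where
  "setting K n N p \<longleftrightarrow> Kok K \<and> n \<ge> 1 \<and> prob_seq N p \<and> (\<forall>i\<in>{1..N}. p i < 1)"

lemma setting_N: assumes "setting K n N p" shows "N \<ge> 2"
proof (rule ccontr)
  assume "\<not> N \<ge> 2"
  hence "N = 0 \<or> N = 1" by auto
  thus False using assms unfolding setting_def prob_seq_def by auto
qed

lemma setting_weight: assumes "setting K n N p" "i \<in> {1..N}"
  shows "weight n N p i = (real N - 1) / ((1 - p i) * real n)" "weight n N p i > 0"
proof -
  have s: "(\<Sum>j\<in>{1..N}. p j) = 1" and pi: "p i < 1" and n: "n \<ge> 1"
    using assms unfolding setting_def prob_seq_def by auto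
  show e: "weight n N p i = (real N - 1) / ((1 - p i) * real n)"
    unfolding weight_def s by simp
  have "N \<ge> 2" using setting_N[OF assms(1)] .
  hence a: "real N - 1 > 0" by simp
  have b: "(1 - p i) * real n > 0" using pi n by simp
  show "weight n N p i > 0" unfolding e using a b by (rule divide_pos_pos)
qed

lemma setting_sum_inv: assumes "setting K n N p"
  shows "(\<Sum>i\<in>{1..N}. 1 / weight n N p i) = real n"
proof -
  have N: "N \<ge> 2" using setting_N[OF assms] .
  have s: "(\<Sum>j\<in>{1..N}. p j) = 1" and n: "n \<ge> 1"
    using assms unfolding setting_def prob_seq_def by auto
  have "(\<Sum>i\<in>{1..N}. 1 / weight n N p i) = (\<Sum>i\<in>{1..N}. (1 - p i) * (real n / (real N - 1)))"
    using N n by (intro sum.cong refl) (simp add: setting_weight[OF assms])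
  also have "\<dots> = (\<Sum>i\<in>{1..N}. (1 - p i)) * (real n / (real N - 1))"
    by (rule sum_distrib_right[symmetric])
  also have "(\<Sum>i\<in>{1..N}. (1 - p i)) = real N - 1" using s by (simp add: sum_subtractf)
  finally show ?thesis using N by simp
qed

lemma weights_lb:
  fixes q t :: "nat \<Rightarrow> real"
  assumes fin: "finite S" and ne: "S \<noteq> {}" and q: "\<forall>i\<in>S. q i > 0"
    and sq: "(\<Sum>i\<in>S. 1 / q i) = x" and st: "(\<Sum>i\<in>S. t i) \<ge> x"
  shows "\<exists>i\<in>S. q i * t i \<ge> 1" "(\<forall>i\<in>S. q i * t i \<le> 1) \<Longrightarrow> (\<forall>i\<in>S. q i * t i = 1)"
proof -
  show "\<exists>i\<in>S. q i * t i \<ge> 1"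
  proof (rule ccontr)
    assume "\<not> (\<exists>i\<in>S. q i * t i \<ge> 1)"
    hence "\<forall>i\<in>S. t i < 1 / q i" using q by (auto simp: field_simps)
    hence "(\<Sum>i\<in>S. t i) < (\<Sum>i\<in>S. 1 / q i)" using fin ne by (intro sum_strict_mono) auto
    thus False using sq st by simp
  qed
  assume a: "\<forall>i\<in>S. q i * t i \<le> 1"
  hence le: "\<forall>i\<in>S. t i \<le> 1 / q i" using q by (auto simp: field_simps)
  have "(\<Sum>i\<in>S. 1 / q i - t i) = 0"
  proof -
    have "(\<Sum>i\<in>S. 1 / q i - t i) \<le> 0" using sq st by (simp add: sum_subtractf)
    moreover have "(\<Sum>i\<in>S. 1 / q i - t i) \<ge> 0" using le by (intro sum_nonneg) auto
    ultimately show ?thesis by simp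
  qed
  hence "\<forall>i\<in>S. 1 / q i - t i = 0" using fin le by (subst (asm) sum_nonneg_eq_0_iff) auto
  show "\<forall>i\<in>S. q i * t i = 1"
  proof
    fix i assume i: "i \<in> S"
    hence "t i = 1 / q i" using \<open>\<forall>i\<in>S. 1 / q i - t i = 0\<close> by simp
    moreover have "q i > 0" using q i by blast
    ultimately show "q i * t i = 1" by simp
  qed
qed

definition aa where "aa K n N p F G i = opnorm K n (err_op n N p F G {i})"
definition rr where "rr n N p F G i = spectral_radius (err_op n N p F G {i})"

lemma card1_sets0: "{L. L \<subseteq> S \<and> card L = 1} = (\<lambda>i. {i}) ` S"
  by (auto simp: card_1_singleton_iff)

lemma card1_sets: "{f L | L. L \<subseteq> {1..N} \<and> card L = 1} = (\<lambda>i. f {i}) ` {1..(N::nat)}"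
proof -
  have "{f L | L. L \<subseteq> {1..N} \<and> card L = 1} = f ` {L. L \<subseteq> {1..N} \<and> card L = 1}"
    by blast
  also have "\<dots> = (\<lambda>i. f {i}) ` {1..N}" unfolding card1_sets0 image_image ..
  finally show ?thesis .
qed

lemma O1_Max: "O1 K n N p F G = Max ((aa K n N p F G) ` {1..N})"
  unfolding O1_def aa_def using card1_sets[of "\<lambda>L. opnorm K n (err_op n N p F G L)" N]
  by (simp add: image_image)

lemma A1_Max: "A1 K n N p F G = Max ((\<lambda>i. (aa K n N p F G i + rr n N p F G i) / 2) ` {1..N})"
  unfolding A1_def aa_def rr_def
  using card1_sets[of "\<lambda>L. (opnorm K n (err_op n N p F G L) + spectral_radius (err_op n N p F G L)) / 2" N]
  by (simp add: image_image)

lemma Max_img_le_iff: "finite S \<Longrightarrow> S \<noteq> {} \<Longrightarrow> Max (f ` S) \<le> (x::real) \<longleftrightarrow> (\<forall>i\<in>S. f i \<le> x)"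
  by (simp add: Max_le_iff)

lemma Max_img_ge: "finite S \<Longrightarrow> i \<in> S \<Longrightarrow> f i \<le> Max (f ` S)"
  by (simp add: Max_ge)

section \<open>Trace identity\<close>

lemma lincomb_index: "r < n \<Longrightarrow> lincomb n N c G $ r = (\<Sum>i\<in>{1..N}. c i * G i $ r)"
  unfolding lincomb_def by simp

lemma dual_trace:
  assumes K: "Kok K" and d: "is_dual K n N F G"
    and F: "\<forall>i\<in>{1..N}. F i \<in> carrier_vec n"
  shows "(\<Sum>i\<in>{1..N}. ip (G i) (F i)) = of_nat n"
proof -
  have k: "(\<Sum>i\<in>{1..N}. G i $ k * cnj (F i $ k)) = 1" if k: "k < n" for k
  proof -
    have u: "unit_vec n k \<in> hspace K n" using K k by (rule hspace_unit)
    hence "unit_vec n k = lincomb n N (\<lambda>i. ip (unit_vec n k) (F i)) G"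
      using d unfolding is_dual_def by blast
    hence "unit_vec n k $ k = lincomb n N (\<lambda>i. ip (unit_vec n k) (F i)) G $ k" by simp
    also have "\<dots> = (\<Sum>i\<in>{1..N}. cnj (F i $ k) * G i $ k)"
      using k F by (simp add: lincomb_index ip_unit)
    finally show ?thesis using k by (simp add: mult.commute)
  qed
  have "(\<Sum>i\<in>{1..N}. ip (G i) (F i)) = (\<Sum>i\<in>{1..N}. \<Sum>k<n. G i $ k * cnj (F i $ k))"
    using F by (intro sum.cong refl) (simp add: ip_expand_carrier)
  also have "\<dots> = (\<Sum>k<n. \<Sum>i\<in>{1..N}. G i $ k * cnj (F i $ k))" by (rule sum.swap)
  also have "\<dots> = (\<Sum>k<n. 1)" using k by simp
  finally show ?thesis by simp
qed

lemma ip_add_left: "u \<in> carrier_vec n \<Longrightarrow> v \<in> carrier_vec n \<Longrightarrow> w \<in> carrier_vec n \<Longrightarrow>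
  ip (u + v) w = ip u w + ip v w"
  by (simp add: ip_expand_carrier sum.distrib algebra_simps)

lemma ip_add_right: "u \<in> carrier_vec n \<Longrightarrow> v \<in> carrier_vec n \<Longrightarrow> w \<in> carrier_vec n \<Longrightarrow>
  ip u (v + w) = ip u v + ip u w"
proof -
  assume a: "u \<in> carrier_vec n" "v \<in> carrier_vec n" "w \<in> carrier_vec n"
  hence vw: "v + w \<in> carrier_vec n" by simp
  have "ip u (v + w) = (\<Sum>r<n. u $ r * cnj ((v + w) $ r))" by (rule ip_expand_carrier[OF vw])
  also have "\<dots> = (\<Sum>r<n. u $ r * cnj (v $ r) + u $ r * cnj (w $ r))"
    by (rule sum.cong) (use a in \<open>auto simp: algebra_simps\<close>)
  also have "\<dots> = ip u v + ip u w" using a by (simp add: ip_expand_carrier sum.distrib)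
  finally show ?thesis .
qed

lemma sum_delta_mult: "finite S \<Longrightarrow> j \<in> S \<Longrightarrow> (\<Sum>i\<in>S. (if i = j then 1 else 0) * (x i :: complex)) = x j"
proof -
  assume a: "finite S" "j \<in> S"
  have "(\<Sum>i\<in>S. (if i = j then 1 else 0) * x i) = (\<Sum>i\<in>S. if i = j then x i else 0)"
    by (rule sum.cong) auto
  also have "\<dots> = x j" using a by simp
  finally show ?thesis .
qed

lemma ip_unit_right: "v \<in> carrier_vec n \<Longrightarrow> k < n \<Longrightarrow> ip v (unit_vec n k) = v $ k"
  using ip_unit[of v n k] ip_cnj[of "unit_vec n k" v] by simp

lemma ip_lincomb_left:
  assumes g: "g \<in> carrier_vec n" and G: "\<forall>i\<in>{1..N}. G i \<in> carrier_vec n"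
  shows "ip (lincomb n N c G) g = (\<Sum>i\<in>{1..N}. c i * ip (G i) g)"
proof -
  have "ip (lincomb n N c G) g = (\<Sum>r<n. (\<Sum>i\<in>{1..N}. c i * G i $ r) * cnj (g $ r))"
    using g by (simp add: ip_expand_carrier lincomb_index)
  also have "\<dots> = (\<Sum>r<n. \<Sum>i\<in>{1..N}. c i * (G i $ r * cnj (g $ r)))"
    by (intro sum.cong refl) (simp add: sum_distrib_right mult.assoc)
  also have "\<dots> = (\<Sum>i\<in>{1..N}. \<Sum>r<n. c i * (G i $ r * cnj (g $ r)))" by (rule sum.swap)
  also have "\<dots> = (\<Sum>i\<in>{1..N}. c i * ip (G i) g)"
    using G g by (intro sum.cong refl) (simp add: ip_expand_carrier sum_distrib_left)
  finally show ?thesis .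
qed

lemma lincomb_carrier: "lincomb n N c G \<in> carrier_vec n"
  unfolding lincomb_def by simp

lemma lincomb_smult_coeff: "lincomb n N (\<lambda>i. a * c i) G = a \<cdot>\<^sub>v lincomb n N c G"
  unfolding lincomb_def by (rule eq_vecI) (simp_all add: sum_distrib_left algebra_simps)

lemma lincomb_smult_vec: "\<forall>i\<in>{1..N}. G i \<in> carrier_vec n \<Longrightarrow>
  lincomb n N c (\<lambda>i. a \<cdot>\<^sub>v G i) = a \<cdot>\<^sub>v lincomb n N c G"
  unfolding lincomb_def by (rule eq_vecI) (auto simp add: sum_distrib_left algebra_simps intro!: sum.cong)

lemma lincomb_delta: "j \<in> {1..N} \<Longrightarrow> G j \<in> carrier_vec n \<Longrightarrow>
  lincomb n N (\<lambda>i. if i = j then 1 else 0) G = G j"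
  unfolding lincomb_def by (rule eq_vecI) (simp_all add: sum_delta_mult)

lemma hspace_real_entries: "v \<in> hspace \<real> n \<Longrightarrow> r < n \<Longrightarrow> v $ r \<in> \<real>"
  unfolding hspace_def by auto

lemma ip_real: "u \<in> hspace \<real> n \<Longrightarrow> v \<in> hspace \<real> n \<Longrightarrow> ip u v \<in> \<real>"
  by (auto simp: ip_expand_carrier[OF hspace_carrier] hspace_real_entries Reals_cnj_iff[THEN iffD1]
      intro!: sum_in_Reals Reals_mult)

section \<open>Tight frames\<close>

definition tightA :: "complex set \<Rightarrow> nat \<Rightarrow> nat \<Rightarrow> (nat \<Rightarrow> complex vec) \<Rightarrow> real \<Rightarrow> bool" where
  "tightA K n N F A \<longleftrightarrow> (\<forall>i\<in>{1..N}. F i \<in> hspace K n) \<and> A > 0 \<and>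
     (\<forall>f\<in>hspace K n. (\<Sum>i\<in>{1..N}. (cmod (ip f (F i)))\<^sup>2) = A * (vnorm f)\<^sup>2)"

lemma tight_obtain: "is_tight_frame K n N F \<Longrightarrow> \<exists>A. tightA K n N F A"
  unfolding is_tight_frame_def tightA_def by blast

definition phi :: "nat \<Rightarrow> (nat \<Rightarrow> complex vec) \<Rightarrow> complex vec \<Rightarrow> complex vec \<Rightarrow> complex" where
  "phi N F f g = (\<Sum>i\<in>{1..N}. ip f (F i) * cnj (ip g (F i)))"

lemma phi_self: assumes t: "tightA K n N F A" and f: "f \<in> hspace K n"
  shows "phi N F f f = of_real A * ip f f"
proof -
  have "phi N F f f = (\<Sum>i\<in>{1..N}. of_real ((cmod (ip f (F i)))\<^sup>2))"
    unfolding phi_def by (simp only: complex_norm_square)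
  also have "\<dots> = of_real (\<Sum>i\<in>{1..N}. (cmod (ip f (F i)))\<^sup>2)" by simp
  also have "\<dots> = of_real (A * nsq f)" using t f unfolding tightA_def by (simp add: vnorm_sq)
  finally show ?thesis by (simp add: ip_self)
qed

lemma phi_frame_op: assumes t: "tightA K n N F A" and f: "f \<in> hspace K n" and k: "k < n"
  shows "phi N F f (unit_vec n k) = frame_op n N F f $ k"
proof -
  have F: "\<forall>i\<in>{1..N}. F i \<in> carrier_vec n" using t unfolding tightA_def by (auto intro: hspace_carrier)
  show ?thesis unfolding phi_def frame_op_def using k F by (simp add: lincomb_index ip_unit)
qed

lemma tight_frame_op:
  assumes K: "Kok K" and t: "tightA K n N F A" and f: "f \<in> hspace K n"
  shows "frame_op n N F f = complex_of_real A \<cdot>\<^sub>v f"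
proof -
  have F: "\<forall>i\<in>{1..N}. F i \<in> carrier_vec n" using t unfolding tightA_def by (auto intro: hspace_carrier)
  have fc: "f \<in> carrier_vec n" using f by (rule hspace_carrier)
  define z where "z g = phi N F f g - of_real A * ip f g" for g
  have pol: "z g + cnj (z g) = 0" if g: "g \<in> hspace K n" for g
  proof -
    have gc: "g \<in> carrier_vec n" using g by (rule hspace_carrier)
    have fg: "f + g \<in> hspace K n" using K f g by (rule hspace_add)
    define a where "a i = ip f (F i)" for i
    define b where "b i = ip g (F i)" for i
    have "phi N F (f + g) (f + g) = (\<Sum>i\<in>{1..N}. (a i + b i) * cnj (a i + b i))"
      unfolding phi_def a_def b_def using F fc gc by (intro sum.cong refl) (simp add: ip_add_left)
    also have "\<dots> = phi N F f f + phi N F g g + phi N F f g + cnj (phi N F f g)"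
      unfolding phi_def a_def b_def by (simp add: sum.distrib algebra_simps)
    finally have e1: "phi N F (f + g) (f + g) = phi N F f f + phi N F g g + phi N F f g + cnj (phi N F f g)" .
    have e2: "ip (f + g) (f + g) = ip f f + ip g g + ip f g + cnj (ip f g)"
      using fc gc ip_cnj[of f g] by (simp add: ip_add_left ip_add_right algebra_simps)
    have "phi N F (f + g) (f + g) = of_real A * ip (f + g) (f + g)" by (rule phi_self[OF t fg])
    hence "phi N F f f + phi N F g g + phi N F f g + cnj (phi N F f g)
       = of_real A * (ip f f + ip g g + ip f g + cnj (ip f g))" using e1 e2 by simp
    thus ?thesis unfolding z_def using phi_self[OF t f] phi_self[OF t g]
      by (simp add: algebra_simps)
  qed
  have z0: "z g = 0" if g: "g \<in> hspace K n" for g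
  proof (cases "K = \<real>")
    case True
    have "phi N F f g \<in> \<real>" unfolding phi_def using t f g True unfolding tightA_def
      by (auto intro!: sum_in_Reals Reals_mult ip_real simp: Reals_cnj_iff[THEN iffD1, OF ip_real])
    moreover have "ip f g \<in> \<real>" using f g True by (auto intro: ip_real)
    ultimately have "z g \<in> \<real>" unfolding z_def by simp
    hence "cnj (z g) = z g" by (simp add: Reals_cnj_iff)
    thus ?thesis using pol[OF g] by simp
  next
    case False
    hence KU: "K = UNIV" using K unfolding Kok_def by auto
    have gc: "g \<in> carrier_vec n" using g by (rule hspace_carrier)
    have ig: "\<i> \<cdot>\<^sub>v g \<in> hspace K n" using KU gc unfolding hspace_def by auto
    have "phi N F f (\<i> \<cdot>\<^sub>v g) = - \<i> * phi N F f g"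
      unfolding phi_def sum_distrib_left
    proof (rule sum.cong[OF refl])
      fix x assume "x \<in> {1..N}"
      hence "F x \<in> carrier_vec n" using F by blast
      hence "ip (\<i> \<cdot>\<^sub>v g) (F x) = \<i> * ip g (F x)" using gc by (intro ip_smult_left) auto
      thus "ip f (F x) * cnj (ip (\<i> \<cdot>\<^sub>v g) (F x)) = - \<i> * (ip f (F x) * cnj (ip g (F x)))" by simp
    qed
    hence "z (\<i> \<cdot>\<^sub>v g) = - \<i> * z g"
      unfolding z_def by (simp add: ip_smult_right algebra_simps)
    hence "- \<i> * z g + cnj (- \<i> * z g) = 0" using pol[OF ig] by simp
    hence "z g - cnj (z g) = 0" by (simp add: algebra_simps)
    with pol[OF g] have "2 * z g = 0" by (simp add: algebra_simps)
    thus ?thesis by simp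
  qed
  show ?thesis
  proof (rule eq_vecI)
    show "dim_vec (frame_op n N F f) = dim_vec (complex_of_real A \<cdot>\<^sub>v f)"
      using fc unfolding frame_op_def lincomb_def by simp
    fix k assume "k < dim_vec (complex_of_real A \<cdot>\<^sub>v f)"
    hence k: "k < n" using fc by simp
    have "frame_op n N F f $ k = phi N F f (unit_vec n k)" using phi_frame_op[OF t f k] by simp
    also have "\<dots> = of_real A * ip f (unit_vec n k)" using z0[OF hspace_unit[OF K k]] unfolding z_def by simp
    also have "\<dots> = (complex_of_real A \<cdot>\<^sub>v f) $ k" using fc k by (simp add: ip_unit_right)
    finally show "frame_op n N F f $ k = (complex_of_real A \<cdot>\<^sub>v f) $ k" .
  qed
qed

lemma tight_canon:
  assumes K: "Kok K" and t: "tightA K n N F A" and i: "i \<in> {1..N}"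
  shows "canon_dual K n N F i = complex_of_real (1 / A) \<cdot>\<^sub>v F i"
proof -
  have Ap: "A > 0" using t unfolding tightA_def by auto
  have Fi: "F i \<in> hspace K n" using t i unfolding tightA_def by auto
  have inj: "inj_on (frame_op n N F) (hspace K n)"
  proof (rule inj_onI)
    fix x y assume x: "x \<in> hspace K n" and y: "y \<in> hspace K n" and e: "frame_op n N F x = frame_op n N F y"
    hence "complex_of_real A \<cdot>\<^sub>v x = complex_of_real A \<cdot>\<^sub>v y" using tight_frame_op[OF K t] by simp
    hence "complex_of_real (1/A) \<cdot>\<^sub>v (complex_of_real A \<cdot>\<^sub>v x) = complex_of_real (1/A) \<cdot>\<^sub>v (complex_of_real A \<cdot>\<^sub>v y)"
      by simp
    thus "x = y" using Ap by (simp add: smult_smult_assoc)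
  qed
  have mem: "complex_of_real (1 / A) \<cdot>\<^sub>v F i \<in> hspace K n" using K Fi by (rule hspace_smult_real)
  have "frame_op n N F (complex_of_real (1 / A) \<cdot>\<^sub>v F i) = F i"
    using tight_frame_op[OF K t mem] Ap by (simp add: smult_smult_assoc)
  thus ?thesis unfolding canon_dual_def by (rule the_inv_into_f_eq[OF inj _ mem])
qed

lemma lincomb_cong: "(\<And>i. i \<in> {1..N} \<Longrightarrow> c i = d i) \<Longrightarrow> (\<And>i. i \<in> {1..N} \<Longrightarrow> G i = H i) \<Longrightarrow>
  lincomb n N c G = lincomb n N d H"
  unfolding lincomb_def by (intro eq_vecI) (auto intro!: sum.cong)

lemma tight_is_frame: "tightA K n N F A \<Longrightarrow> is_frame K n N F"
  unfolding tightA_def is_frame_def by (intro conjI; force)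

lemma tight_nsq_le: assumes t: "tightA K n N F A" and i: "i \<in> {1..N}"
  shows "nsq (F i) \<le> A"
proof -
  have Fi: "F i \<in> hspace K n" and A: "A > 0" using t i unfolding tightA_def by auto
  have "(cmod (ip (F i) (F i)))\<^sup>2 \<le> (\<Sum>j\<in>{1..N}. (cmod (ip (F i) (F j)))\<^sup>2)"
    using i by (intro member_le_sum) auto
  also have "\<dots> = A * nsq (F i)" using t Fi unfolding tightA_def by (simp add: vnorm_sq)
  finally have "(nsq (F i))^2 \<le> A * nsq (F i)" by (simp add: ip_self nsq_nonneg)
  hence "nsq (F i) * nsq (F i) \<le> A * nsq (F i)" by (simp add: power2_eq_square)
  thus ?thesis using A nsq_nonneg[of "F i"]
    by (cases "nsq (F i) = 0") (auto simp: mult_le_cancel_right)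
qed

lemma canon_pair:
  assumes K: "Kok K" and t: "tightA K n N F A"
  shows "dual_pair K n N F (canon_dual K n N F)"
proof -
  have A: "A > 0" and F: "\<forall>i\<in>{1..N}. F i \<in> hspace K n" using t unfolding tightA_def by auto
  have Fc: "\<forall>i\<in>{1..N}. F i \<in> carrier_vec n" using F by (auto intro: hspace_carrier)
  let ?c = "complex_of_real (1 / A)"
  have can: "canon_dual K n N F i = ?c \<cdot>\<^sub>v F i" if "i \<in> {1..N}" for i using tight_canon[OF K t that] .
  have canH: "\<forall>i\<in>{1..N}. canon_dual K n N F i \<in> hspace K n"
  proof
    fix i assume i: "i \<in> {1..N}"
    have "?c \<cdot>\<^sub>v F i \<in> hspace K n" using F i K by (intro hspace_smult_real) auto
    thus "canon_dual K n N F i \<in> hspace K n" by (simp only: can[OF i])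
  qed
  have ipc: "ip f (canon_dual K n N F i) = ?c * ip f (F i)" if "i \<in> {1..N}" for f i
    using can[OF that] by (simp add: ip_smult_right)
  have e: "(\<Sum>i\<in>{1..N}. (cmod (ip f (canon_dual K n N F i)))\<^sup>2) = 1/A * (vnorm f)^2"
    if f: "f \<in> hspace K n" for f
  proof -
    have "(\<Sum>i\<in>{1..N}. (cmod (ip f (canon_dual K n N F i)))\<^sup>2) = (\<Sum>i\<in>{1..N}. (1/A)^2 * (cmod (ip f (F i)))\<^sup>2)"
      using A by (intro sum.cong refl) (simp add: ipc norm_divide power_divide)
    also have "\<dots> = (1/A)^2 * (\<Sum>i\<in>{1..N}. (cmod (ip f (F i)))\<^sup>2)" by (rule sum_distrib_left[symmetric])
    also have "\<dots> = (1/A)^2 * (A * (vnorm f)^2)" using t f unfolding tightA_def by simp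
    also have "\<dots> = 1/A * (vnorm f)^2" using A by (simp add: power2_eq_square)
    finally show ?thesis .
  qed
  have fr: "is_frame K n N (canon_dual K n N F)"
    unfolding is_frame_def
  proof (intro conjI)
    show "\<forall>i\<in>{1..N}. canon_dual K n N F i \<in> hspace K n" by (rule canH)
    show "\<exists>A' B'. A' > 0 \<and> B' > 0 \<and> (\<forall>f\<in>hspace K n.
        A' * (vnorm f)\<^sup>2 \<le> (\<Sum>i\<in>{1..N}. (cmod (ip f (canon_dual K n N F i)))\<^sup>2) \<and>
        (\<Sum>i\<in>{1..N}. (cmod (ip f (canon_dual K n N F i)))\<^sup>2) \<le> B' * (vnorm f)\<^sup>2)"
      using e A by (intro exI[of _ "1/A"]) auto
  qed
  have rec: "f = lincomb n N (\<lambda>i. ip f (F i)) (canon_dual K n N F) \<and>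
             f = lincomb n N (\<lambda>i. ip f (canon_dual K n N F i)) F" if f: "f \<in> hspace K n" for f
  proof
    have fc: "f \<in> carrier_vec n" using f by (rule hspace_carrier)
    have "lincomb n N (\<lambda>i. ip f (F i)) (canon_dual K n N F) = lincomb n N (\<lambda>i. ip f (F i)) (\<lambda>i. ?c \<cdot>\<^sub>v F i)"
      by (rule lincomb_cong) (auto simp: can)
    also have "\<dots> = ?c \<cdot>\<^sub>v frame_op n N F f" unfolding frame_op_def using Fc by (rule lincomb_smult_vec)
    also have "\<dots> = f" using tight_frame_op[OF K t f] A fc by (simp add: smult_smult_assoc)
    finally show "f = lincomb n N (\<lambda>i. ip f (F i)) (canon_dual K n N F)" by simp
    have "lincomb n N (\<lambda>i. ip f (canon_dual K n N F i)) F = lincomb n N (\<lambda>i. ?c * ip f (F i)) F"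
      by (rule lincomb_cong) (auto simp: ipc)
    also have "\<dots> = ?c \<cdot>\<^sub>v frame_op n N F f" unfolding frame_op_def by (rule lincomb_smult_coeff)
    also have "\<dots> = f" using tight_frame_op[OF K t f] A fc by (simp add: smult_smult_assoc)
    finally show "f = lincomb n N (\<lambda>i. ip f (canon_dual K n N F i)) F" by simp
  qed
  show ?thesis unfolding dual_pair_def is_dual_def using tight_is_frame[OF t] fr rec by blast
qed

lemma dual_pair_carrier: "dual_pair K n N F G \<Longrightarrow> i \<in> {1..N} \<Longrightarrow> F i \<in> hspace K n \<and> G i \<in> hspace K n"
  unfolding dual_pair_def is_dual_def is_frame_def by auto

section \<open>General dual pairs\<close>

lemma pair_basic:
  assumes s: "setting K n N p" and d: "dual_pair K n N F G"
  shows "\<And>i. i \<in> {1..N} \<Longrightarrow> aa K n N p F G i = weight n N p i * vnorm (G i) * vnorm (F i)"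
    "\<And>i. i \<in> {1..N} \<Longrightarrow> rr n N p F G i = weight n N p i * cmod (ip (G i) (F i))"
    "\<And>i. i \<in> {1..N} \<Longrightarrow> rr n N p F G i \<le> aa K n N p F G i"
    "\<exists>i\<in>{1..N}. rr n N p F G i \<ge> 1"
    "(\<forall>i\<in>{1..N}. rr n N p F G i \<le> 1) \<Longrightarrow> (\<forall>i\<in>{1..N}. rr n N p F G i = 1)"
proof -
  have K: "Kok K" and n: "n \<ge> 1" using s unfolding setting_def by auto
  have H: "F i \<in> hspace K n \<and> G i \<in> hspace K n" if "i \<in> {1..N}" for i using dual_pair_carrier[OF d that] .
  have q: "weight n N p i > 0" if "i \<in> {1..N}" for i using setting_weight(2)[OF s that] .
  show a: "aa K n N p F G i = weight n N p i * vnorm (G i) * vnorm (F i)" if i: "i \<in> {1..N}" for i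
    unfolding aa_def using H[OF i] q[OF i] K n by (intro opnorm_single) (auto intro: hspace_carrier)
  show r: "rr n N p F G i = weight n N p i * cmod (ip (G i) (F i))" if i: "i \<in> {1..N}" for i
    unfolding rr_def using H[OF i] q[OF i] n by (intro spectral_radius_single) (auto intro: hspace_carrier)
  show "rr n N p F G i \<le> aa K n N p F G i" if i: "i \<in> {1..N}" for i
  proof -
    have "dim_vec (G i) = n" "dim_vec (F i) = n" using H[OF i] hspace_dim by auto
    hence "cmod (ip (G i) (F i)) \<le> vnorm (G i) * vnorm (F i)" by (intro cs) simp
    thus ?thesis unfolding a[OF i] r[OF i] using q[OF i] by (simp add: mult.assoc)
  qed
  have Fc: "\<forall>i\<in>{1..N}. F i \<in> carrier_vec n" using H hspace_carrier by blast
  have tr: "(\<Sum>i\<in>{1..N}. ip (G i) (F i)) = of_nat n"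
    using d unfolding dual_pair_def by (intro dual_trace[OF K _ Fc]) auto
  have st: "(\<Sum>i\<in>{1..N}. cmod (ip (G i) (F i))) \<ge> real n"
  proof -
    have "real n = cmod (\<Sum>i\<in>{1..N}. ip (G i) (F i))" using tr by simp
    also have "\<dots> \<le> (\<Sum>i\<in>{1..N}. cmod (ip (G i) (F i)))" by (rule norm_sum)
    finally show ?thesis .
  qed
  have ne: "{1..N} \<noteq> {}" using setting_N[OF s] by auto
  note wl = weights_lb[of "{1..N}" "weight n N p" "real n" "\<lambda>i. cmod (ip (G i) (F i))", OF finite_atLeastAtMost ne
      _ setting_sum_inv[OF s] st]
  show "\<exists>i\<in>{1..N}. rr n N p F G i \<ge> 1" using wl(1) q r by auto
  assume "\<forall>i\<in>{1..N}. rr n N p F G i \<le> 1"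
  thus "\<forall>i\<in>{1..N}. rr n N p F G i = 1" using wl(2) q r by auto
qed

lemma pair_props:
  assumes s: "setting K n N p" and d: "dual_pair K n N F G"
  shows "A1 K n N p F G \<le> O1 K n N p F G" "1 \<le> A1 K n N p F G"
    "O1 K n N p F G = 1 \<longleftrightarrow> A1 K n N p F G = 1"
proof -
  note b = pair_basic[OF s d]
  let ?a = "aa K n N p F G" and ?r = "rr n N p F G"
  have fin: "finite {1..N}" and ne: "{1..N} \<noteq> {}" using setting_N[OF s] by auto
  have O1le: "O1 K n N p F G \<le> x \<longleftrightarrow> (\<forall>i\<in>{1..N}. ?a i \<le> x)" for x
    unfolding O1_Max using fin ne by (rule Max_img_le_iff)
  have A1le: "A1 K n N p F G \<le> x \<longleftrightarrow> (\<forall>i\<in>{1..N}. (?a i + ?r i) / 2 \<le> x)" for x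
    unfolding A1_Max using fin ne by (rule Max_img_le_iff)
  have O1ge: "?a i \<le> O1 K n N p F G" if "i \<in> {1..N}" for i
    unfolding O1_Max using fin that by (rule Max_img_ge)
  have A1ge: "(?a i + ?r i) / 2 \<le> A1 K n N p F G" if "i \<in> {1..N}" for i
    unfolding A1_Max using fin that by (rule Max_img_ge[where f = "\<lambda>i. (?a i + ?r i) / 2"])
  show le: "A1 K n N p F G \<le> O1 K n N p F G"
    unfolding A1le
  proof
    fix i assume i: "i \<in> {1..N}"
    have x1: "?r i \<le> ?a i" by (rule b(3)[OF i])
    have x2: "?a i \<le> O1 K n N p F G" by (rule O1ge[OF i])
    have "(?a i + ?r i) / 2 \<le> ?a i" using x1 by simp
    thus "(?a i + ?r i) / 2 \<le> O1 K n N p F G" using x2 by (rule order_trans)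
  qed
  obtain i where i: "i \<in> {1..N}" "?r i \<ge> 1" using b(4) by blast
  have h: "?r i \<le> (?a i + ?r i) / 2" using b(3)[OF i(1)] by simp
  show ge: "1 \<le> A1 K n N p F G" using i(2) h A1ge[OF i(1)] by (meson order_trans)
  show "O1 K n N p F G = 1 \<longleftrightarrow> A1 K n N p F G = 1"
  proof
    assume o: "O1 K n N p F G = 1"
    hence "\<forall>i\<in>{1..N}. ?a i \<le> 1" using O1le[of 1] by simp
    hence "\<forall>i\<in>{1..N}. ?r i \<le> 1" using b(3) by force
    hence r1: "\<forall>i\<in>{1..N}. ?r i = 1" using b(5) by blast
    have "A1 K n N p F G \<le> 1" unfolding A1le using r1 \<open>\<forall>i\<in>{1..N}. ?a i \<le> 1\<close> by simp
    thus "A1 K n N p F G = 1" using ge by linarith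
  next
    assume a: "A1 K n N p F G = 1"
    hence h0: "\<forall>i\<in>{1..N}. (?a i + ?r i) / 2 \<le> 1" using A1le[of 1] by simp
    hence h: "\<forall>i\<in>{1..N}. ?a i + ?r i \<le> 2" by simp
    hence "\<forall>i\<in>{1..N}. ?r i \<le> 1" using b(3) by force
    hence r1: "\<forall>i\<in>{1..N}. ?r i = 1" using b(5) by blast
    have "O1 K n N p F G \<le> 1" unfolding O1le using r1 h by simp
    thus "O1 K n N p F G = 1" using le a by linarith
  qed
qed

section \<open>Square case\<close>

lemma recon_coord:
  assumes K: "Kok K" and d: "is_dual K n N F G" and F: "\<forall>i\<in>{1..N}. F i \<in> carrier_vec n"
    and r: "r < n" and s: "s < n"
  shows "(\<Sum>i\<in>{1..N}. G i $ r * cnj (F i $ s)) = (if r = s then 1 else 0)"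
proof -
  have u: "unit_vec n s \<in> hspace K n" using K s by (rule hspace_unit)
  hence "unit_vec n s = lincomb n N (\<lambda>i. ip (unit_vec n s) (F i)) G"
    using d unfolding is_dual_def by blast
  hence "unit_vec n s $ r = lincomb n N (\<lambda>i. ip (unit_vec n s) (F i)) G $ r" by simp
  also have "\<dots> = (\<Sum>i\<in>{1..N}. cnj (F i $ s) * G i $ r)"
    using r s F by (simp add: lincomb_index ip_unit)
  finally show ?thesis using r s by (simp add: mult.commute)
qed

lemma biorth:
  assumes K: "Kok K" and d: "is_dual K n n F G" and F: "\<forall>i\<in>{1..n}. F i \<in> carrier_vec n"
    and G: "\<forall>i\<in>{1..n}. G i \<in> carrier_vec n"
    and i: "i \<in> {1..n}" and j: "j \<in> {1..n}"
  shows "ip (G j) (F i) = (if i = j then 1 else 0)"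
proof -
  define Gm where "Gm = mat n n (\<lambda>(r, k). G (Suc k) $ r)"
  define Fh where "Fh = mat n n (\<lambda>(k, s). cnj (F (Suc k) $ s))"
  have Gm: "Gm \<in> carrier_mat n n" and Fh: "Fh \<in> carrier_mat n n" unfolding Gm_def Fh_def by auto
  have "Gm * Fh = 1\<^sub>m n"
  proof (rule eq_matI)
    fix r s assume r: "r < dim_row (1\<^sub>m n)" and s: "s < dim_col (1\<^sub>m n)"
    have "(Gm * Fh) $$ (r, s) = (\<Sum>k<n. G (Suc k) $ r * cnj (F (Suc k) $ s))"
      using r s unfolding Gm_def Fh_def by (simp add: scalar_prod_def atLeast0LessThan)
    also have "\<dots> = (\<Sum>k\<in>{1..n}. G k $ r * cnj (F k $ s))"
      by (simp add: sum.atLeast1_atMost_eq)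
    also have "\<dots> = (if r = s then 1 else 0)" using recon_coord[OF K d F] r s by simp
    finally show "(Gm * Fh) $$ (r, s) = 1\<^sub>m n $$ (r, s)" using r s by simp
  qed (auto simp: Gm_def Fh_def)
  hence FG: "Fh * Gm = 1\<^sub>m n" by (rule mat_mult_left_right_inverse[OF Gm Fh])
  obtain i' where i': "i = Suc i'" "i' < n" using i by (cases i) auto
  obtain j' where j': "j = Suc j'" "j' < n" using j by (cases j) auto
  have "(Fh * Gm) $$ (i', j') = (\<Sum>r<n. cnj (F i $ r) * G j $ r)"
    using i' j' unfolding Gm_def Fh_def by (simp add: scalar_prod_def atLeast0LessThan)
  also have "\<dots> = ip (G j) (F i)"
  proof -
    have Fi: "F i \<in> carrier_vec n" using F i by blast
    show ?thesis by (simp add: ip_expand_carrier[OF Fi] mult.commute)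
  qed
  finally show ?thesis using FG i' j' by auto
qed

lemma uniq_square:
  assumes K: "Kok K" and t: "tightA K n n F A" and d: "is_dual K n n F G" and j: "j \<in> {1..n}"
  shows "G j = canon_dual K n n F j"
proof -
  have A: "A > 0" and FH: "\<forall>i\<in>{1..n}. F i \<in> hspace K n" using t unfolding tightA_def by auto
  have GH: "\<forall>i\<in>{1..n}. G i \<in> hspace K n" using d unfolding is_dual_def is_frame_def by auto
  have F: "\<forall>i\<in>{1..n}. F i \<in> carrier_vec n" and G: "\<forall>i\<in>{1..n}. G i \<in> carrier_vec n"
    using FH GH by (auto intro: hspace_carrier)
  have Gj: "G j \<in> hspace K n" using GH j by blast
  have "frame_op n n F (G j) = lincomb n n (\<lambda>i. if i = j then 1 else 0) F"
    unfolding frame_op_def by (rule lincomb_cong) (use biorth[OF K d F G _ j] in auto)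
  also have "\<dots> = F j" using j F by (intro lincomb_delta) auto
  finally have "complex_of_real A \<cdot>\<^sub>v G j = F j" using tight_frame_op[OF K t Gj] by simp
  hence "complex_of_real (1/A) \<cdot>\<^sub>v (complex_of_real A \<cdot>\<^sub>v G j) = complex_of_real (1/A) \<cdot>\<^sub>v F j" by simp
  hence "G j = complex_of_real (1/A) \<cdot>\<^sub>v F j" using A by (simp add: smult_smult_assoc)
  thus ?thesis using tight_canon[OF K t j] by simp
qed

definition good :: "nat \<Rightarrow> complex vec \<Rightarrow> real \<Rightarrow> bool" where
  "good d h w \<longleftrightarrow> h \<in> carrier_vec d \<and> (\<forall>r<d. h $ r \<in> \<real>) \<and> nsq h = w"

definition Pm :: "nat \<Rightarrow> nat \<Rightarrow> nat \<Rightarrow> complex" where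
  "Pm m r s = (if r = s \<and> r < m then 1 else 0)"

definition osum :: "complex vec list \<Rightarrow> nat \<Rightarrow> nat \<Rightarrow> complex" where
  "osum hs r s = (\<Sum>h\<leftarrow>hs. h $ r * cnj (h $ s))"

lemma osum_Cons[simp]: "osum (h # hs) r s = h $ r * cnj (h $ s) + osum hs r s"
  unfolding osum_def by simp

lemma osum_Nil[simp]: "osum [] r s = 0"
  unfolding osum_def by simp

lemma osum_diag: "osum hs r r = of_real (\<Sum>h\<leftarrow>hs. (cmod (h $ r))^2)"
  unfolding osum_def by (induct hs) (simp_all add: complex_norm_square[symmetric] del: of_real_power)

lemma nsq_zero_entry: assumes "h \<in> carrier_vec d" "nsq h = 0" "r < d" shows "h $ r = 0"
proof -
  have "(\<Sum>r<d. (cmod (h $ r))^2) = 0" using assms unfolding nsq_def by simp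
  hence "\<forall>r\<in>{..<d}. (cmod (h $ r))^2 = 0" by (subst (asm) sum_nonneg_eq_0_iff) auto
  thus ?thesis using assms by simp
qed

lemma nsq_comb:
  assumes u: "u \<in> carrier_vec d" and k: "k < d" and uk: "u $ k = 0"
  shows "nsq (complex_of_real a \<cdot>\<^sub>v u + complex_of_real b \<cdot>\<^sub>v unit_vec d k) = a^2 * nsq u + b^2"
proof -
  let ?x = "complex_of_real a \<cdot>\<^sub>v u + complex_of_real b \<cdot>\<^sub>v unit_vec d k"
  have dx: "dim_vec ?x = d" using u by simp
  have t: "(cmod (?x $ r))^2 = a^2 * (cmod (u $ r))^2 + (if r = k then b^2 else 0)" if r: "r < d" for r
  proof (cases "r = k")
    case True thus ?thesis using u r uk k by (simp add: norm_mult power_mult_distrib)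
  next
    case False thus ?thesis using u r k by (simp add: norm_mult power_mult_distrib)
  qed
  have "nsq ?x = (\<Sum>r<d. a^2 * (cmod (u $ r))^2 + (if r = k then b^2 else 0))"
    unfolding nsq_def dx by (intro sum.cong refl, rule t) auto
  also have "\<dots> = a^2 * nsq u + b^2" using u k
    by (simp add: sum.distrib sum_distrib_left nsq_def)
  finally show ?thesis .
qed

lemma parseval_list:
  "\<forall>ws m. length ws = L \<longrightarrow> (\<forall>w\<in>set ws. 0 \<le> w \<and> w \<le> 1) \<longrightarrow> sum_list ws = real m \<longrightarrow> m \<le> d \<longrightarrow>
     (\<exists>hs. list_all2 (good d) hs ws \<and> (\<forall>r<d. \<forall>s<d. osum hs r s = Pm m r s))"
proof (induction L rule: less_induct)
  case (less L)
  show ?case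
  proof (intro allI impI)
    fix ws :: "real list" and m
    assume len: "length ws = L" and wr: "\<forall>w\<in>set ws. 0 \<le> w \<and> w \<le> 1" and sm: "sum_list ws = real m"
      and md: "m \<le> d"
    show "\<exists>hs. list_all2 (good d) hs ws \<and> (\<forall>r<d. \<forall>s<d. osum hs r s = Pm m r s)"
    proof (cases ws)
      case Nil
      hence "m = 0" using sm by simp
      thus ?thesis using Nil by (intro exI[of _ "[]"]) (simp add: Pm_def)
    next
      case (Cons w1 ws1)
      note ws = Cons
      show ?thesis
      proof (cases ws1)
        case Nil
        hence w1: "w1 = real m" "0 \<le> w1" "w1 \<le> 1" using sm wr ws by auto
        hence "m = 0 \<or> m = 1" by linarith
        thus ?thesis
        proof
          assume m0: "m = 0"
          show ?thesis using ws Nil w1 m0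
            by (intro exI[of _ "[0\<^sub>v d]"]) (simp add: good_def Pm_def nsq_def)
        next
          assume m1: "m = 1"
          hence d: "0 < d" using md by simp
          have g: "good d (unit_vec d 0) w1"
            unfolding good_def nsq_def using w1 m1 d
            by (auto simp: if_distrib[of "\<lambda>x. (cmod x)^2"] cong: if_cong)
          show ?thesis using ws Nil m1 g
            by (intro exI[of _ "[unit_vec d 0]"]) (auto simp: Pm_def)
        qed
      next
        case (Cons w2 rest)
        note ws1 = Cons
        have w1r: "0 \<le> w1" "w1 \<le> 1" and w2r: "0 \<le> w2" "w2 \<le> 1" and restr: "\<forall>w\<in>set rest. 0 \<le> w \<and> w \<le> 1"
          using wr ws ws1 by auto
        have sr: "sum_list rest \<ge> 0" using restr by (intro sum_list_nonneg) auto
        have sm': "w1 + w2 + sum_list rest = real m" using sm ws ws1 by simp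
        have lenL: "length ((w1 + w2) # rest) < L" "length ((w1 + w2 - 1) # rest) < L" using len ws ws1 by auto
        show ?thesis
        proof (cases "w1 + w2 \<le> 1")
          case True
          have "\<exists>hs. list_all2 (good d) hs ((w1 + w2) # rest) \<and> (\<forall>r<d. \<forall>s<d. osum hs r s = Pm m r s)"
            using less.IH[OF lenL(1)] True w1r w2r restr sm' md by auto
          then obtain u hr where u: "good d u (w1 + w2)" and hr: "list_all2 (good d) hr rest"
            and os: "\<forall>r<d. \<forall>s<d. osum (u # hr) r s = Pm m r s"
            by (auto simp: list_all2_Cons2)
          have uc: "u \<in> carrier_vec d" and ur: "\<forall>r<d. u $ r \<in> \<real>" and un: "nsq u = w1 + w2"
            using u unfolding good_def by auto
          show ?thesis
          proof (cases "w1 + w2 = 0")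
            case z: True
            hence w0: "w1 = 0" "w2 = 0" using w1r w2r by auto
            have u0: "u $ r = 0" if "r < d" for r using nsq_zero_entry[OF uc _ that] un z by simp
            have g0: "good d (0\<^sub>v d) 0" unfolding good_def nsq_def by simp
            show ?thesis
            proof (intro exI[of _ "0\<^sub>v d # 0\<^sub>v d # hr"] conjI allI impI)
              show "list_all2 (good d) (0\<^sub>v d # 0\<^sub>v d # hr) ws" using ws ws1 g0 hr w0 by simp
              fix r s assume r: "r < d" and s: "s < d"
              show "osum (0\<^sub>v d # 0\<^sub>v d # hr) r s = Pm m r s" using os r s u0 by auto
            qed
          next
            case nz: False
            define \<sigma> where "\<sigma> = w1 + w2"
            have sp: "\<sigma> > 0" using nz w1r w2r unfolding \<sigma>_def by auto
            define h1 where "h1 = complex_of_real (sqrt (w1 / \<sigma>)) \<cdot>\<^sub>v u"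
            define h2 where "h2 = complex_of_real (sqrt (w2 / \<sigma>)) \<cdot>\<^sub>v u"
            have g1: "good d h1 w1" unfolding good_def h1_def using uc ur un sp w1r
              by (auto simp: nsq_smult \<sigma>_def)
            have g2: "good d h2 w2" unfolding good_def h2_def using uc ur un sp w2r
              by (auto simp: nsq_smult \<sigma>_def)
            show ?thesis
            proof (intro exI[of _ "h1 # h2 # hr"] conjI allI impI)
              show "list_all2 (good d) (h1 # h2 # hr) ws" using ws ws1 g1 g2 hr by simp
              fix r s assume r: "r < d" and s: "s < d"
              have "h1 $ r * cnj (h1 $ s) + h2 $ r * cnj (h2 $ s)
                  = complex_of_real (w1 / \<sigma> + w2 / \<sigma>) * (u $ r * cnj (u $ s))"
              proof -
                have q1: "complex_of_real (sqrt (w1 / \<sigma>)) * complex_of_real (sqrt (w1 / \<sigma>)) = complex_of_real (w1 / \<sigma>)"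
                  using sp w1r by (simp add: of_real_mult[symmetric] del: of_real_mult)
                have q2: "complex_of_real (sqrt (w2 / \<sigma>)) * complex_of_real (sqrt (w2 / \<sigma>)) = complex_of_real (w2 / \<sigma>)"
                  using sp w2r by (simp add: of_real_mult[symmetric] del: of_real_mult)
                have "h1 $ r * cnj (h1 $ s) + h2 $ r * cnj (h2 $ s)
                  = (complex_of_real (sqrt (w1 / \<sigma>)) * complex_of_real (sqrt (w1 / \<sigma>))
                    + complex_of_real (sqrt (w2 / \<sigma>)) * complex_of_real (sqrt (w2 / \<sigma>))) * (u $ r * cnj (u $ s))"
                  unfolding h1_def h2_def using uc r s by (simp add: algebra_simps)
                also have "\<dots> = complex_of_real (w1 / \<sigma> + w2 / \<sigma>) * (u $ r * cnj (u $ s))"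
                  unfolding q1 q2 by simp
                finally show ?thesis .
              qed
              also have "w1 / \<sigma> + w2 / \<sigma> = 1" using sp unfolding \<sigma>_def by (simp add: add_divide_distrib[symmetric])
              finally have "h1 $ r * cnj (h1 $ s) + h2 $ r * cnj (h2 $ s) = u $ r * cnj (u $ s)" by simp
              thus "osum (h1 # h2 # hr) r s = Pm m r s" using os r s by (simp add: add.assoc[symmetric])
            qed
          qed
        next
          case False
          define \<sigma> where "\<sigma> = w1 + w2 - 1"
          have sp: "0 < \<sigma>" "\<sigma> \<le> 1" using False w1r w2r unfolding \<sigma>_def by auto
          have m2: "m \<ge> 1" using sm' sr False by (cases m) auto
          define k where "k = m - 1"
          have kd: "k < d" using md m2 unfolding k_def by simp
          have smk: "(\<sigma> + sum_list rest) = real k" using sm' m2 unfolding \<sigma>_def k_def by (simp add: of_nat_diff)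
          have "\<exists>hs. list_all2 (good d) hs (\<sigma> # rest) \<and> (\<forall>r<d. \<forall>s<d. osum hs r s = Pm k r s)"
            using less.IH[OF lenL(2)] sp restr smk kd unfolding \<sigma>_def by auto
          then obtain u hr where u: "good d u \<sigma>" and hr: "list_all2 (good d) hr rest"
            and os: "\<forall>r<d. \<forall>s<d. osum (u # hr) r s = Pm k r s"
            by (auto simp: list_all2_Cons2)
          have uc: "u \<in> carrier_vec d" and ur: "\<forall>r<d. u $ r \<in> \<real>" and un: "nsq u = \<sigma>"
            using u unfolding good_def by auto
          have uk: "u $ k = 0"
          proof -
            have "osum (u # hr) k k = 0" using os kd by (simp add: Pm_def k_def)
            hence "complex_of_real (\<Sum>h\<leftarrow>u # hr. (cmod (h $ k))^2) = 0" unfolding osum_diag .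
            hence "(\<Sum>h\<leftarrow>u # hr. (cmod (h $ k))^2) = 0" by (simp only: of_real_eq_0_iff)
            hence e: "(cmod (u $ k))^2 + (\<Sum>h\<leftarrow>hr. (cmod (h $ k))^2) = 0" by simp
            have "(\<Sum>h\<leftarrow>hr. (cmod (h $ k))^2) \<ge> 0" by (intro sum_list_nonneg) auto
            hence "(cmod (u $ k))^2 = 0" using e by (smt (verit) zero_le_power2)
            thus ?thesis by simp
          qed
          define \<gamma> where "\<gamma> = (if \<sigma> = 1 then 1 else (1 - w1) / (1 - \<sigma>))"
          have g01: "0 \<le> \<gamma>" "\<gamma> \<le> 1" using sp w1r w2r unfolding \<gamma>_def \<sigma>_def by (auto simp: field_simps)
          have gw1: "\<gamma> * \<sigma> + (1 - \<gamma>) = w1"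
          proof (cases "\<sigma> = 1")
            case True thus ?thesis using w1r w2r unfolding \<gamma>_def \<sigma>_def by auto
          next
            case False hence ns: "1 - \<sigma> \<noteq> 0" by simp
            have e: "\<gamma> * (1 - \<sigma>) = 1 - w1" unfolding \<gamma>_def using False ns by simp
            have "\<gamma> * \<sigma> + (1 - \<gamma>) = 1 - \<gamma> * (1 - \<sigma>)" by (simp add: algebra_simps)
            also have "\<dots> = w1" using e by simp
            finally show ?thesis .
          qed
          define c where "c = sqrt \<gamma>"
          define s where "s = sqrt (1 - \<gamma>)"
          have c2: "c^2 = \<gamma>" and s2: "s^2 = 1 - \<gamma>" unfolding c_def s_def using g01 by auto
          define e :: "complex vec" where "e = unit_vec d k"
          define h1 where "h1 = complex_of_real c \<cdot>\<^sub>v u + complex_of_real s \<cdot>\<^sub>v e"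
          define h2 where "h2 = complex_of_real s \<cdot>\<^sub>v u + complex_of_real (- c) \<cdot>\<^sub>v e"
          have g1: "good d h1 w1" unfolding good_def h1_def e_def
            using uc ur kd nsq_comb[OF uc kd uk, of c s] c2 s2 un gw1 by auto
          have gw2: "(1 - \<gamma>) * \<sigma> + \<gamma> = w2"
          proof -
            have "(1 - \<gamma>) * \<sigma> + \<gamma> = \<sigma> + 1 - (\<gamma> * \<sigma> + (1 - \<gamma>))" by (simp add: algebra_simps)
            also have "\<dots> = w2" using gw1 unfolding \<sigma>_def by simp
            finally show ?thesis .
          qed
          have n2: "nsq h2 = w2" unfolding h2_def e_def
            using nsq_comb[OF uc kd uk, of s "-c"] c2 s2 un gw2 by simp
          have g2: "good d h2 w2" unfolding good_def using n2 uc ur kd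
            unfolding h2_def e_def by auto
          show ?thesis
          proof (intro exI[of _ "h1 # h2 # hr"] conjI allI impI)
            show "list_all2 (good d) (h1 # h2 # hr) ws" using ws ws1 g1 g2 hr by simp
            fix r t assume r: "r < d" and t: "t < d"
            define C where "C = complex_of_real c"
            define S where "S = complex_of_real s"
            have r1: "c * c + s * s = 1" using c2 s2 by (simp add: power2_eq_square[symmetric])
            have "complex_of_real (c * c + s * s) = 1" using r1 by simp
            hence CS: "C * C + S * S = 1" unfolding C_def S_def by simp
            have "h1 $ r * cnj (h1 $ t) + h2 $ r * cnj (h2 $ t)
                = (C * C + S * S) * (u $ r * cnj (u $ t) + e $ r * e $ t)"
              unfolding h1_def h2_def e_def C_def S_def using uc r t kd
              by (simp add: algebra_simps)
            also have "\<dots> = u $ r * cnj (u $ t) + (if r = k \<and> t = k then 1 else 0)"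
              unfolding CS e_def using r t kd by simp
            finally have "h1 $ r * cnj (h1 $ t) + h2 $ r * cnj (h2 $ t) = u $ r * cnj (u $ t) + (if r = k \<and> t = k then 1 else 0)" .
            hence "osum (h1 # h2 # hr) r t = osum (u # hr) r t + (if r = k \<and> t = k then 1 else 0)"
              by (simp add: algebra_simps)
            also have "\<dots> = Pm m r t" using os r t m2 unfolding Pm_def k_def by auto
            finally show "osum (h1 # h2 # hr) r t = Pm m r t" .
          qed
        qed
      qed
    qed
  qed
qed

lemma osum_fun: "osum hs r s = (\<Sum>i\<in>{1..length hs}. hs ! (i - 1) $ r * cnj (hs ! (i - 1) $ s))"
proof -
  have "osum hs r s = (\<Sum>j = 0..<length hs. hs ! j $ r * cnj (hs ! j $ s))"
    unfolding osum_def by (simp add: sum_list_sum_nth)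
  also have "\<dots> = (\<Sum>i\<in>{Suc 0..length hs}. hs ! (i - 1) $ r * cnj (hs ! (i - 1) $ s))"
    by (simp add: sum.atLeast1_atMost_eq atLeast0LessThan)
  finally show ?thesis by simp
qed

lemma parseval_pair:
  assumes s: "setting K n N p" and N: "N \<ge> n + 1"
  shows "\<exists>H. dual_pair K n N H H \<and> O1 K n N p H H \<le> 1"
proof -
  have K: "Kok K" and n: "n \<ge> 1" and pr: "prob_seq N p" using s unfolding setting_def by auto
  have N2: "N \<ge> 2" using setting_N[OF s] .
  define w where "w i = 1 / weight n N p i" for i
  define ws where "ws = map w [1..<N+1]"
  have wval: "w i = (1 - p i) * real n / (real N - 1)" if i: "i \<in> {1..N}" for i
    unfolding w_def using setting_weight(1)[OF s i] by simp
  have wr: "0 \<le> w i \<and> w i \<le> 1" if i: "i \<in> {1..N}" for i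
  proof -
    have p: "0 \<le> p i" "p i \<le> 1" using pr i unfolding prob_seq_def by auto
    have N1: "real N - 1 \<ge> real n" using N by simp
    have "(1 - p i) * real n \<le> real n" using p by (simp add: mult_left_le_one_le)
    also have "\<dots> \<le> real N - 1" by (rule N1)
    finally have "(1 - p i) * real n \<le> real N - 1" .
    moreover have "0 \<le> (1 - p i) * real n" using p by simp
    moreover have "real N - 1 > 0" using N2 by simp
    ultimately show ?thesis unfolding wval[OF i] by (simp add: divide_le_eq_1)
  qed
  have setws: "set [1..<N+1] = {1..N}" by auto
  have wsr: "\<forall>x\<in>set ws. 0 \<le> x \<and> x \<le> 1" unfolding ws_def using wr setws by auto
  have wss: "sum_list ws = real n"
  proof -
    have "sum_list ws = sum w (set [1..<N+1])" unfolding ws_def by (rule sum_set_upt_conv_sum_list_nat[symmetric])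
    also have "\<dots> = real n" unfolding setws w_def by (rule setting_sum_inv[OF s])
    finally show ?thesis .
  qed
  obtain hs where hs: "list_all2 (good n) hs ws" and os: "\<forall>r<n. \<forall>s<n. osum hs r s = Pm n r s"
    using parseval_list[rule_format, of ws "length ws" n n] wsr wss by auto
  have lhs: "length hs = N" using list_all2_lengthD[OF hs] unfolding ws_def by simp
  define H where "H i = hs ! (i - 1)" for i
  have gH: "good n (H i) (w i)" if i: "i \<in> {1..N}" for i
  proof -
    have "i - 1 < length hs" using i lhs by auto
    hence "good n (hs ! (i - 1)) (ws ! (i - 1))" by (rule list_all2_nthD[OF hs])
    moreover have "ws ! (i - 1) = w i"
    proof -
      have l: "i - 1 < length [1..<N+1]" using i by auto
      have "ws ! (i - 1) = w ([1..<N+1] ! (i - 1))" unfolding ws_def by (rule nth_map[OF l])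
      also have "[1..<N+1] ! (i - 1) = 1 + (i - 1)" by (rule nth_upt) (use i in auto)
      also have "1 + (i - 1) = i" using i by auto
      finally show ?thesis .
    qed
    ultimately show ?thesis unfolding H_def by simp
  qed
  have Hc: "H i \<in> carrier_vec n" if "i \<in> {1..N}" for i using gH[OF that] unfolding good_def by auto
  have HH: "H i \<in> hspace K n" if "i \<in> {1..N}" for i
    using gH[OF that] K unfolding good_def hspace_def Kok_def by auto
  have PS: "(\<Sum>i\<in>{1..N}. H i $ r * cnj (H i $ s)) = (if r = s then 1 else 0)" if "r < n" "s < n" for r s
    using os that osum_fun[of hs r s] lhs unfolding H_def Pm_def by auto
  have rec: "lincomb n N (\<lambda>i. ip f (H i)) H = f" if f: "f \<in> carrier_vec n" for f
  proof (rule eq_vecI)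
    show "dim_vec (lincomb n N (\<lambda>i. ip f (H i)) H) = dim_vec f" using f by (simp add: lincomb_def)
    fix r assume "r < dim_vec f"
    hence r: "r < n" using f by simp
    have "lincomb n N (\<lambda>i. ip f (H i)) H $ r = (\<Sum>i\<in>{1..N}. (\<Sum>s<n. f $ s * cnj (H i $ s)) * H i $ r)"
      using r Hc by (simp add: lincomb_index) (intro sum.cong refl, simp add: ip_expand_carrier)
    also have "\<dots> = (\<Sum>i\<in>{1..N}. \<Sum>s<n. f $ s * (H i $ r * cnj (H i $ s)))"
    proof (intro sum.cong refl)
      fix i
      show "(\<Sum>s<n. f $ s * cnj (H i $ s)) * H i $ r = (\<Sum>s<n. f $ s * (H i $ r * cnj (H i $ s)))"
        unfolding sum_distrib_right by (rule sum.cong) (simp_all add: ac_simps)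
    qed
    also have "\<dots> = (\<Sum>s<n. \<Sum>i\<in>{1..N}. f $ s * (H i $ r * cnj (H i $ s)))" by (rule sum.swap)
    also have "\<dots> = (\<Sum>s<n. f $ s * (if r = s then 1 else 0))"
    proof (intro sum.cong refl)
      fix s assume "s \<in> {..<n}"
      hence "s < n" by simp
      thus "(\<Sum>i\<in>{1..N}. f $ s * (H i $ r * cnj (H i $ s))) = f $ s * (if r = s then 1 else 0)"
        using PS[OF r, of s] by (simp add: sum_distrib_left[symmetric])
    qed
    also have "\<dots> = f $ r" using r by (simp add: if_distrib[of "\<lambda>x. f $ _ * x"] cong: if_cong)
    finally show "lincomb n N (\<lambda>i. ip f (H i)) H $ r = f $ r" .
  qed
  have fr_eq: "(\<Sum>i\<in>{1..N}. (cmod (ip f (H i)))\<^sup>2) = (vnorm f)\<^sup>2" if f: "f \<in> carrier_vec n" for f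
  proof -
    have "complex_of_real (\<Sum>i\<in>{1..N}. (cmod (ip f (H i)))\<^sup>2) = (\<Sum>i\<in>{1..N}. ip f (H i) * ip (H i) f)"
    proof -
      have "complex_of_real (\<Sum>i\<in>{1..N}. (cmod (ip f (H i)))\<^sup>2) = (\<Sum>i\<in>{1..N}. ip f (H i) * cnj (ip f (H i)))"
        by (simp only: of_real_sum complex_norm_square)
      also have "\<dots> = (\<Sum>i\<in>{1..N}. ip f (H i) * ip (H i) f)"
      proof (intro sum.cong refl)
        fix i assume "i \<in> {1..N}"
        hence "H i \<in> carrier_vec n" by (rule Hc)
        hence "ip (H i) f = cnj (ip f (H i))" using f by (intro ip_cnj) auto
        thus "ip f (H i) * cnj (ip f (H i)) = ip f (H i) * ip (H i) f" by simp
      qed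
      finally show ?thesis .
    qed
    also have "\<dots> = ip (lincomb n N (\<lambda>i. ip f (H i)) H) f"
      using f Hc by (simp add: ip_lincomb_left)
    also have "\<dots> = complex_of_real (nsq f)" using rec[OF f] by (simp add: ip_self)
    finally have "complex_of_real (\<Sum>i\<in>{1..N}. (cmod (ip f (H i)))\<^sup>2) = complex_of_real (nsq f)" .
    hence "(\<Sum>i\<in>{1..N}. (cmod (ip f (H i)))\<^sup>2) = nsq f" by (simp only: of_real_eq_iff)
    thus ?thesis by (simp add: vnorm_sq)
  qed
  have fr: "is_frame K n N H"
    unfolding is_frame_def
  proof (intro conjI)
    show "\<forall>i\<in>{1..N}. H i \<in> hspace K n" using HH by blast
    show "\<exists>A B. A > 0 \<and> B > 0 \<and> (\<forall>f\<in>hspace K n.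
        A * (vnorm f)\<^sup>2 \<le> (\<Sum>i\<in>{1..N}. (cmod (ip f (H i)))\<^sup>2) \<and>
        (\<Sum>i\<in>{1..N}. (cmod (ip f (H i)))\<^sup>2) \<le> B * (vnorm f)\<^sup>2)"
      using fr_eq hspace_carrier by (intro exI[of _ 1]) auto
  qed
  have dp: "dual_pair K n N H H"
    unfolding dual_pair_def is_dual_def using fr rec hspace_carrier by metis
  have "O1 K n N p H H \<le> 1"
  proof -
    have fin: "finite {1..N}" and ne: "{1..N} \<noteq> {}" using N2 by auto
    have "aa K n N p H H i \<le> 1" if i: "i \<in> {1..N}" for i
    proof -
      have "aa K n N p H H i = weight n N p i * vnorm (H i) * vnorm (H i)" by (rule pair_basic(1)[OF s dp i])
      also have "\<dots> = weight n N p i * nsq (H i)" by (simp add: vnorm_sq[symmetric] power2_eq_square)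
      also have "\<dots> = weight n N p i * w i" using gH[OF i] unfolding good_def by simp
      also have "\<dots> = 1" unfolding w_def using setting_weight(2)[OF s i] by simp
      finally show ?thesis by simp
    qed
    thus ?thesis unfolding O1_Max using Max_img_le_iff[OF fin ne] by blast
  qed
  thus ?thesis using dp by blast
qed

lemma square_A1_lb:
  assumes s: "setting K n n p" and d: "dual_pair K n n F G" and i: "i \<in> {1..n}"
  shows "weight n n p i \<le> A1 K n n p F G"
proof -
  have K: "Kok K" using s unfolding setting_def by auto
  have Fc: "\<forall>j\<in>{1..n}. F j \<in> carrier_vec n" and Gc: "\<forall>j\<in>{1..n}. G j \<in> carrier_vec n"
    using dual_pair_carrier[OF d] hspace_carrier by blast+
  have dd: "is_dual K n n F G" using d unfolding dual_pair_def by auto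
  have "ip (G i) (F i) = 1" using biorth[OF K dd Fc Gc i i] by simp
  hence r: "rr n n p F G i = weight n n p i" using pair_basic(2)[OF s d i] by simp
  have "rr n n p F G i \<le> (aa K n n p F G i + rr n n p F G i) / 2" using pair_basic(3)[OF s d i] by simp
  also have "\<dots> \<le> A1 K n n p F G" unfolding A1_Max
    by (rule Max_img_ge[where f = "\<lambda>i. (aa K n n p F G i + rr n n p F G i) / 2"]) (use i in auto)
  finally show ?thesis using r by simp
qed

theorem theorem4p4:
  fixes K :: "complex set" and n N :: nat and p :: "nat \<Rightarrow> real" and F :: "nat \<Rightarrow> complex vec"
  assumes field: "K = \<real> \<or> K = UNIV"
    and dim: "n \<ge> 1"
    and tight: "is_tight_frame K n N F"
    and prob: "prob_seq N p"
    and wdef: "\<forall>i\<in>{1..N}. p i < 1"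
  shows "(is_POD_pair K n N p F (canon_dual K n N F) \<and>
          (\<forall>G. is_dual K n N F G \<and> is_POD_pair K n N p F G \<longrightarrow>
               (\<forall>i\<in>{1..N}. G i = canon_dual K n N F i)))
     \<longleftrightarrow>
         (is_PASOD_pair K n N p F (canon_dual K n N F) \<and>
          (\<forall>G. is_dual K n N F G \<and> is_PASOD_pair K n N p F G \<longrightarrow>
               (\<forall>i\<in>{1..N}. G i = canon_dual K n N F i)))"
proof -
  have K: "Kok K" using field unfolding Kok_def .
  have s: "setting K n N p" unfolding setting_def using K dim prob wdef by auto
  obtain A where t: "tightA K n N F A" using tight_obtain[OF tight] by blast
  have A: "A > 0" and FH: "\<forall>i\<in>{1..N}. F i \<in> hspace K n" using t unfolding tightA_def by auto
  have N2: "N \<ge> 2" using setting_N[OF s] .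
  have fin: "finite {1..N}" and ne: "{1..N} \<noteq> {}" using N2 by auto
  define can where "can = canon_dual K n N F"
  have dpc: "dual_pair K n N F can" unfolding can_def by (rule canon_pair[OF K t])
  have canv: "can i = complex_of_real (1/A) \<cdot>\<^sub>v F i" if "i \<in> {1..N}" for i
    unfolding can_def by (rule tight_canon[OF K t that])
  define m where "m i = weight n N p i * nsq (F i) / A" for i
  have Fc: "F i \<in> carrier_vec n" if "i \<in> {1..N}" for i using FH that hspace_carrier by blast
  have aac: "aa K n N p F can i = m i" if i: "i \<in> {1..N}" for i
  proof -
    have "aa K n N p F can i = weight n N p i * vnorm (can i) * vnorm (F i)" by (rule pair_basic(1)[OF s dpc i])
    also have "vnorm (can i) = 1 / A * vnorm (F i)" using A by (simp add: canv[OF i] vnorm_smult norm_divide)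
    finally show ?thesis unfolding m_def using A
      by (simp add: vnorm_sq[symmetric] power2_eq_square)
  qed
  have rrc: "rr n N p F can i = m i" if i: "i \<in> {1..N}" for i
  proof -
    have "rr n N p F can i = weight n N p i * cmod (ip (can i) (F i))" by (rule pair_basic(2)[OF s dpc i])
    also have "ip (can i) (F i) = complex_of_real (1/A) * complex_of_real (nsq (F i))"
      unfolding canv[OF i] using Fc[OF i] by (simp add: ip_smult_left ip_self)
    also have "\<dots> = complex_of_real (nsq (F i) / A)" by simp
    finally show ?thesis unfolding m_def using A nsq_nonneg[of "F i"] by (simp add: norm_divide)
  qed
  define M where "M = O1 K n N p F can"
  have Mm: "M = Max (m ` {1..N})" unfolding M_def O1_Max by (rule arg_cong[where f = Max], rule image_cong) (auto simp: aac)
  have AM: "A1 K n N p F can = M" unfolding Mm A1_Max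
    by (rule arg_cong[where f = Max], rule image_cong) (auto simp: aac rrc)
  define SO where "SO = {O1 K n N p F' G' | F' G'. dual_pair K n N F' G'}"
  define SA where "SA = {A1 K n N p F' G' | F' G'. dual_pair K n N F' G'}"
  have cOd: "O1_opt K n N p = Inf SO" unfolding O1_opt_def SO_def ..
  have cAd: "A1_opt K n N p = Inf SA" unfolding A1_opt_def SA_def ..
  have MO: "M \<in> SO" using dpc unfolding SO_def M_def by blast
  have MA: "M \<in> SA" using dpc AM unfolding SA_def by force
  have SOlb: "\<forall>x\<in>SO. 1 \<le> x"
  proof
    fix x assume "x \<in> SO"
    then obtain F' G' where x: "x = O1 K n N p F' G'" and d: "dual_pair K n N F' G'" unfolding SO_def by blast
    show "1 \<le> x" using pair_props(1,2)[OF s d] x by linarith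
  qed
  have SAlb: "\<forall>x\<in>SA. 1 \<le> x"
  proof
    fix x assume "x \<in> SA"
    then obtain F' G' where x: "x = A1 K n N p F' G'" and d: "dual_pair K n N F' G'" unfolding SA_def by blast
    show "1 \<le> x" using pair_props(2)[OF s d] x by linarith
  qed
  have bO: "bdd_below SO" using SOlb unfolding bdd_below_def by blast
  have bA: "bdd_below SA" using SAlb unfolding bdd_below_def by blast
  have cOM: "Inf SO \<le> M" by (rule cInf_lower[OF MO bO])
  have cAM: "Inf SA \<le> M" by (rule cInf_lower[OF MA bA])
  have cO1: "1 \<le> Inf SO" using MO SOlb by (intro cInf_greatest) auto
  have cA1: "1 \<le> Inf SA" using MA SAlb by (intro cInf_greatest) auto
  have isd: "dual_pair K n N F G" if "is_dual K n N F G" for G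
    using tight_is_frame[OF t] that unfolding dual_pair_def by blast
  have POD: "is_POD_pair K n N p F G \<longleftrightarrow> dual_pair K n N F G \<and> O1 K n N p F G = Inf SO" for G
    unfolding is_POD_pair_def cOd ..
  have PASOD: "is_PASOD_pair K n N p F G \<longleftrightarrow> dual_pair K n N F G \<and> A1 K n N p F G = Inf SA" for G
    unfolding is_PASOD_pair_def cAd ..
  have cases3: "M \<le> 1 \<or> (M > 1 \<and> N \<ge> n + 1) \<or> (M > 1 \<and> N \<le> n)" by linarith
  show ?thesis
  proof (cases "M \<le> 1")
    case True
    have M1: "M = 1" and O1v: "Inf SO = 1" and A1v: "Inf SA = 1" using True cOM cO1 cAM cA1 by linarith+
    have eqv: "is_POD_pair K n N p F G \<longleftrightarrow> is_PASOD_pair K n N p F G" if "is_dual K n N F G" for G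
      using pair_props(3)[OF s isd[OF that]] isd[OF that] unfolding POD PASOD O1v A1v by simp
    have pc: "is_POD_pair K n N p F can" using dpc M1 O1v unfolding POD M_def by simp
    have ac: "is_PASOD_pair K n N p F can" using dpc M1 A1v AM unfolding PASOD by simp
    show ?thesis using pc ac eqv unfolding can_def by blast
  next
    case False
    hence M1: "M > 1" by simp
    show ?thesis
    proof (cases "N \<ge> n + 1")
      case True
      obtain H where dH: "dual_pair K n N H H" and OH: "O1 K n N p H H \<le> 1"
        using parseval_pair[OF s True] by blast
      have "O1 K n N p H H \<in> SO" using dH unfolding SO_def by blast
      hence "Inf SO \<le> 1" using cInf_lower[OF _ bO] OH by (meson order_trans)
      hence nP: "\<not> is_POD_pair K n N p F can" unfolding POD M_def[symmetric] using M1 by auto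
      have "A1 K n N p H H \<in> SA" using dH unfolding SA_def by blast
      hence "Inf SA \<le> A1 K n N p H H" using cInf_lower[OF _ bA] by blast
      also have "\<dots> \<le> 1" using pair_props(1)[OF s dH] OH by linarith
      finally have "Inf SA \<le> 1" .
      hence nA: "\<not> is_PASOD_pair K n N p F can" unfolding PASOD AM using M1 by auto
      show ?thesis using nP nA unfolding can_def by blast
    next
      case False
      hence Nle: "N \<le> n" by simp
      have tr: "(\<Sum>i\<in>{1..N}. ip (can i) (F i)) = of_nat n"
        using dpc unfolding dual_pair_def by (intro dual_trace[OF K]) (auto intro: Fc)
      have le1: "cmod (ip (can i) (F i)) \<le> 1" if i: "i \<in> {1..N}" for i
      proof -
        have "ip (can i) (F i) = complex_of_real (1/A) * complex_of_real (nsq (F i))"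
          unfolding canv[OF i] using Fc[OF i] by (simp add: ip_smult_left ip_self)
        also have "\<dots> = complex_of_real (nsq (F i) / A)" by simp
        finally have "cmod (ip (can i) (F i)) = nsq (F i) / A" using A nsq_nonneg[of "F i"] by (simp add: norm_divide)
        also have "\<dots> \<le> 1" using tight_nsq_le[OF t i] A by simp
        finally show ?thesis .
      qed
      have "real n = cmod (\<Sum>i\<in>{1..N}. ip (can i) (F i))" using tr by simp
      also have "\<dots> \<le> (\<Sum>i\<in>{1..N}. cmod (ip (can i) (F i)))" by (rule norm_sum)
      also have "\<dots> \<le> (\<Sum>i\<in>{1..N}. 1)" using le1 by (intro sum_mono) auto
      finally have "real n \<le> real N" by simp
      hence Nn: "N = n" using Nle by simp
      have mq: "m i \<le> weight n N p i" if i: "i \<in> {1..N}" for i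
      proof -
        have "nsq (F i) / A \<le> 1" using tight_nsq_le[OF t i] A by simp
        hence "weight n N p i * (nsq (F i) / A) \<le> weight n N p i * 1"
          using setting_weight(2)[OF s i] by (intro mult_left_mono) auto
        thus ?thesis unfolding m_def by simp
      qed
      have lbA: "M \<le> A1 K n N p F' G'" if d: "dual_pair K n N F' G'" for F' G'
      proof -
        have "m i \<le> A1 K n N p F' G'" if i: "i \<in> {1..N}" for i
        proof -
          have "weight n n p i \<le> A1 K n n p F' G'"
            using square_A1_lb[of K n p F' G' i] s d i Nn by simp
          thus ?thesis using mq[OF i] Nn by simp
        qed
        thus ?thesis unfolding Mm using Max_img_le_iff[OF fin ne] by blast
      qed
      have "M \<le> Inf SO"
      proof (rule cInf_greatest)
        show "SO \<noteq> {}" using MO by blast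
        fix x assume "x \<in> SO"
        then obtain F' G' where x: "x = O1 K n N p F' G'" and d: "dual_pair K n N F' G'" unfolding SO_def by blast
        show "M \<le> x" using lbA[OF d] pair_props(1)[OF s d] x by linarith
      qed
      hence O1v: "Inf SO = M" using cOM by linarith
      have "M \<le> Inf SA"
      proof (rule cInf_greatest)
        show "SA \<noteq> {}" using MA by blast
        fix x assume "x \<in> SA"
        then obtain F' G' where x: "x = A1 K n N p F' G'" and d: "dual_pair K n N F' G'" unfolding SA_def by blast
        show "M \<le> x" using lbA[OF d] x by linarith
      qed
      hence A1v: "Inf SA = M" using cAM by linarith
      have pc: "is_POD_pair K n N p F can" using dpc O1v unfolding POD M_def by simp
      have ac: "is_PASOD_pair K n N p F can" using dpc A1v AM unfolding PASOD by simp
      have un: "\<forall>i\<in>{1..N}. G i = can i" if "is_dual K n N F G" for G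
      proof
        fix i assume i: "i \<in> {1..N}"
        have "G i = canon_dual K n n F i"
          using uniq_square[of K n F A G i] K t that i Nn by simp
        thus "G i = can i" unfolding can_def using Nn by simp
      qed
      show ?thesis using pc ac un unfolding can_def by blast
    qed
  qed
qed

end
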